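(* Let $W^{(1)},W^{(2)},\ldots$ be an infinite sequence of finite Coxeter groups such that $W^{(n)}$ has rank $n$, and let $s_n^2$ be the variance of the number of $W^{(n)}$-descents of a uniformly random element of $W^{(n)}$. Consider the conditions: (A1) the rank of the non-dihedral component of $W^{(n)}$ tends to infinity; (A2) the rank of the non-dihedral component of $W^{(n)}$ is not globally bounded; (B) the irreducible dihedral components $\{I_2(m_i^{(n)})\}_{i\in I(n)}$ of $W^{(n)}$ satisfy $\sum_{i\in I(n)} 1/m_i^{(n)}\to\infty$. Then $[(\mathrm{A1})\text{ or }(\mathrm{B})]\Rightarrow s_n\to\infty\Rightarrow[(\mathrm{A2})\text{ or }(\mathrm{B})]$.
   Context: The number of descents of $w$ is $\#\{\beta\in\Delta : w(\beta)\in\Phi^-\}$ for a fixed root system with simple roots $\Delta$. Each finite Coxeter group is a product of irreducible components; the irreducible dihedral components are those of type $I_2(m)$ (rank two), and the non-dihedral component of $W$ is the parabolic subgroup formed by all irreducible components of $W$ that are not of dihedral type. *)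

theory Defs
  imports "HOL-Probability.Probability"
begin

text \<open>A Coxeter matrix of rank n is encoded as M :: nat => nat => nat on the index set
{0..<n}: M i i = 1, M i j = M j i >= 2 for i ~= j (finite entries; finiteness of the
group forces all entries to be finite anyway).\<close>

definition coxeter_matrix :: "(nat \<Rightarrow> nat \<Rightarrow> nat) \<Rightarrow> nat \<Rightarrow> bool" where
  "coxeter_matrix M n \<longleftrightarrow>
     (\<forall>i<n. M i i = 1) \<and>
     (\<forall>i<n. \<forall>j<n. M i j = M j i) \<and>
     (\<forall>i<n. \<forall>j<n. i \<noteq> j \<longrightarrow> M i j \<ge> 2)"

text \<open>Geometric (Tits) representation on vectors v :: nat => real whose coordinate k
is the coefficient of the simple root alpha_k (k < n).  Bilinear form
B(alpha_i, alpha_j) = - cos(pi / m_ij).\<close>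

definition cox_form :: "(nat \<Rightarrow> nat \<Rightarrow> nat) \<Rightarrow> nat \<Rightarrow> nat \<Rightarrow> (nat \<Rightarrow> real) \<Rightarrow> real" where
  "cox_form M n i v = (\<Sum>j<n. - cos (pi / real (M i j)) * v j)"

definition simple_root :: "nat \<Rightarrow> nat \<Rightarrow> real" where
  "simple_root i = (\<lambda>k. if k = i then 1 else 0)"

definition cox_refl :: "(nat \<Rightarrow> nat \<Rightarrow> nat) \<Rightarrow> nat \<Rightarrow> nat \<Rightarrow> (nat \<Rightarrow> real) \<Rightarrow> (nat \<Rightarrow> real)" where
  "cox_refl M n i v = (\<lambda>k. v k - 2 * cox_form M n i v * simple_root i k)"

definition cox_group :: "(nat \<Rightarrow> nat \<Rightarrow> nat) \<Rightarrow> nat \<Rightarrow> ((nat \<Rightarrow> real) \<Rightarrow> (nat \<Rightarrow> real)) set" where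
  "cox_group M n = {foldr (\<circ>) (map (cox_refl M n) is) id | is. set is \<subseteq> {..<n}}"

definition cox_roots :: "(nat \<Rightarrow> nat \<Rightarrow> nat) \<Rightarrow> nat \<Rightarrow> (nat \<Rightarrow> real) set" where
  "cox_roots M n = {w (simple_root i) | w i. w \<in> cox_group M n \<and> i < n}"

definition cox_neg_roots :: "(nat \<Rightarrow> nat \<Rightarrow> nat) \<Rightarrow> nat \<Rightarrow> (nat \<Rightarrow> real) set" where
  "cox_neg_roots M n = {\<beta> \<in> cox_roots M n. \<forall>k<n. \<beta> k \<le> 0}"

definition descents :: "(nat \<Rightarrow> nat \<Rightarrow> nat) \<Rightarrow> nat \<Rightarrow> ((nat \<Rightarrow> real) \<Rightarrow> (nat \<Rightarrow> real)) \<Rightarrow> nat" where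
  "descents M n w = card {i. i < n \<and> w (simple_root i) \<in> cox_neg_roots M n}"

definition des_variance :: "(nat \<Rightarrow> nat \<Rightarrow> nat) \<Rightarrow> nat \<Rightarrow> real" where
  "des_variance M n =
     measure_pmf.variance (pmf_of_set (cox_group M n)) (\<lambda>w. real (descents M n w))"

text \<open>Irreducible components = connected components of the Coxeter graph
(vertices {0..<n}, edge i--j iff m_ij >= 3).\<close>

definition cox_edges :: "(nat \<Rightarrow> nat \<Rightarrow> nat) \<Rightarrow> nat \<Rightarrow> (nat \<times> nat) set" where
  "cox_edges M n = {(i, j). i < n \<and> j < n \<and> i \<noteq> j \<and> M i j \<ge> 3}"

definition cox_component :: "(nat \<Rightarrow> nat \<Rightarrow> nat) \<Rightarrow> nat \<Rightarrow> nat \<Rightarrow> nat set" where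
  "cox_component M n i = {j. j < n \<and> (i, j) \<in> (cox_edges M n)\<^sup>*}"

text \<open>Dihedral components: irreducible components of rank two, I_2(m) with m = m_ij,
recorded as pairs (i,j), i < j.\<close>

definition dihedral_pairs :: "(nat \<Rightarrow> nat \<Rightarrow> nat) \<Rightarrow> nat \<Rightarrow> (nat \<times> nat) set" where
  "dihedral_pairs M n = {(i, j). i < j \<and> j < n \<and> cox_component M n i = {i, j}}"

definition dihedral_sum :: "(nat \<Rightarrow> nat \<Rightarrow> nat) \<Rightarrow> nat \<Rightarrow> real" where
  "dihedral_sum M n = (\<Sum>(i, j)\<in>dihedral_pairs M n. 1 / real (M i j))"

definition nondihedral_rank :: "(nat \<Rightarrow> nat \<Rightarrow> nat) \<Rightarrow> nat \<Rightarrow> nat" where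
  "nondihedral_rank M n = card {i. i < n \<and> card (cox_component M n i) \<noteq> 2}"

end

theory Submission
  imports Defs
begin



locale coxm =
  fixes M :: "nat \<Rightarrow> nat \<Rightarrow> nat" and n :: nat
  assumes cm: "coxeter_matrix M n"
begin

definition sr :: "nat \<Rightarrow> (nat\<Rightarrow>real) \<Rightarrow> (nat\<Rightarrow>real)" where "sr i = cox_refl M n i"
definition cf :: "nat \<Rightarrow> (nat\<Rightarrow>real) \<Rightarrow> real" where "cf i = cox_form M n i"
definition ev :: "nat list \<Rightarrow> (nat\<Rightarrow>real) \<Rightarrow> (nat\<Rightarrow>real)" where "ev xs = foldr (\<circ>) (map sr xs) id"
definition WJ :: "nat set \<Rightarrow> ((nat\<Rightarrow>real) \<Rightarrow> (nat\<Rightarrow>real)) set" where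
  "WJ J = {ev xs | xs. set xs \<subseteq> J}"
definition Vs :: "(nat\<Rightarrow>real) set" where "Vs = {v. \<forall>k\<ge>n. v k = 0}"
definition lenJ :: "nat set \<Rightarrow> ((nat\<Rightarrow>real) \<Rightarrow> (nat\<Rightarrow>real)) \<Rightarrow> nat" where
  "lenJ J w = (LEAST k. \<exists>xs. length xs = k \<and> set xs \<subseteq> J \<and> ev xs = w)"

lemma M_diag: "i<n \<Longrightarrow> M i i = 1" using cm by (auto simp: coxeter_matrix_def)
lemma M_sym: "i<n \<Longrightarrow> j<n \<Longrightarrow> M i j = M j i" using cm by (auto simp: coxeter_matrix_def)
lemma M_ge2: "i<n \<Longrightarrow> j<n \<Longrightarrow> i\<noteq>j \<Longrightarrow> 2 \<le> M i j" using cm by (auto simp: coxeter_matrix_def)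

lemma W_eq: "cox_group M n = WJ {..<n}"
  unfolding cox_group_def WJ_def ev_def sr_def by auto

lemma cf_lin: "cf i (\<lambda>k. a * x k + b * y k) = a * cf i x + b * cf i y"
  by (simp add: cf_def cox_form_def sum.distrib[symmetric] sum_distrib_left algebra_simps)

lemma cf_neg: "cf i (\<lambda>k. - x k) = - cf i x"
  by (simp add: cf_def cox_form_def sum_negf)

lemma cf_root: "j<n \<Longrightarrow> cf i (simple_root j) = - cos (pi / real (M i j))"
  by (simp add: cf_def cox_form_def simple_root_def if_distrib cong: if_cong)

lemma cf_self: "i<n \<Longrightarrow> cf i (simple_root i) = 1"
  by (simp add: cf_root M_diag)

lemma sr_apply: "sr i v k = v k - 2 * cf i v * simple_root i k"
  by (simp add: sr_def cox_refl_def cf_def)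

lemma sr_lin: "sr i (\<lambda>k. a * x k + b * y k) = (\<lambda>k. a * sr i x k + b * sr i y k)"
  by (rule ext) (simp add: sr_apply cf_lin algebra_simps)

lemma sr_neg: "sr i (\<lambda>k. - x k) = (\<lambda>k. - sr i x k)"
  by (rule ext) (simp add: sr_apply cf_neg algebra_simps)

lemma cf_sr: "i<n \<Longrightarrow> cf i (sr i v) = - cf i v"
proof -
  assume i: "i<n"
  have "sr i v = (\<lambda>k. 1 * v k + (- 2 * cf i v) * simple_root i k)"
    by (rule ext) (simp add: sr_apply)
  hence "cf i (sr i v) = cf i v + (- 2 * cf i v) * cf i (simple_root i)"
    by (simp only: cf_lin)
  thus ?thesis using cf_self[OF i] by simp
qed

lemma sr_invol: "i<n \<Longrightarrow> sr i (sr i v) = v"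
  by (rule ext) (simp add: sr_apply[of i "sr i v"] cf_sr sr_apply[of i v])

lemma sr_root_self: "i<n \<Longrightarrow> sr i (simple_root i) = (\<lambda>k. - simple_root i k)"
  by (rule ext) (simp add: sr_apply cf_self)

lemma sr_root_other: "i<n \<Longrightarrow> j<n \<Longrightarrow>
   sr i (simple_root j) = (\<lambda>k. simple_root j k + 2 * cos (pi / real (M i j)) * simple_root i k)"
  by (rule ext) (simp add: sr_apply cf_root)

lemma sr_V: "i<n \<Longrightarrow> v \<in> Vs \<Longrightarrow> sr i v \<in> Vs"
  by (auto simp: Vs_def sr_apply simple_root_def)

lemma root_V: "i<n \<Longrightarrow> simple_root i \<in> Vs"
  by (auto simp: Vs_def simple_root_def)

lemma ev_Nil[simp]: "ev [] = id" by (simp add: ev_def)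
lemma ev_Cons[simp]: "ev (x#xs) = sr x \<circ> ev xs" by (simp add: ev_def)
lemma ev_append: "ev (xs@ys) = ev xs \<circ> ev ys"
  by (induction xs) (auto simp: ev_def)
lemma ev_snoc: "ev (xs@[y]) = ev xs \<circ> sr y"
  by (simp add: ev_append)

lemma ev_lin: "ev xs (\<lambda>k. a * x k + b * y k) = (\<lambda>k. a * ev xs x k + b * ev xs y k)"
  by (induction xs arbitrary: x y) (auto simp: sr_lin)

lemma ev_neg: "ev xs (\<lambda>k. - x k) = (\<lambda>k. - ev xs x k)"
  by (induction xs arbitrary: x) (auto simp: sr_neg)

lemma ev_V: "set xs \<subseteq> {..<n} \<Longrightarrow> v \<in> Vs \<Longrightarrow> ev xs v \<in> Vs"
  by (induction xs arbitrary: v) (auto simp: sr_V)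

lemma ev_rev1: "set xs \<subseteq> {..<n} \<Longrightarrow> ev (rev xs) \<circ> ev xs = id"
proof (induction xs)
  case Nil thus ?case by simp
next
  case (Cons x xs)
  have "ev (rev (x#xs)) \<circ> ev (x#xs) = ev (rev xs) \<circ> (sr x \<circ> sr x) \<circ> ev xs"
    by (simp add: ev_snoc comp_assoc)
  also have "sr x \<circ> sr x = id" using Cons.prems by (auto simp: sr_invol)
  finally show ?case using Cons by simp
qed

lemma ev_rev2: "set xs \<subseteq> {..<n} \<Longrightarrow> ev xs \<circ> ev (rev xs) = id"
  using ev_rev1[of "rev xs"] by simp

lemma WJ_id: "id \<in> WJ J"
  unfolding WJ_def by (rule CollectI, rule exI[of _ "[]"]) simp

lemma WJ_comp: "x \<in> WJ J \<Longrightarrow> y \<in> WJ J \<Longrightarrow> x \<circ> y \<in> WJ J"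
  unfolding WJ_def by (auto, metis (no_types, lifting) Un_subset_iff ev_append set_append)

lemma WJ_sr: "i \<in> J \<Longrightarrow> sr i \<in> WJ J"
  unfolding WJ_def by (rule CollectI, rule exI[of _ "[i]"]) simp

lemma WJ_mono: "J \<subseteq> K \<Longrightarrow> WJ J \<subseteq> WJ K"
  unfolding WJ_def by auto

lemma WJ_inv: "J \<subseteq> {..<n} \<Longrightarrow> w \<in> WJ J \<Longrightarrow> \<exists>w'\<in>WJ J. w' \<circ> w = id \<and> w \<circ> w' = id"
proof -
  assume J: "J \<subseteq> {..<n}" and "w \<in> WJ J"
  then obtain xs where xs: "set xs \<subseteq> J" "w = ev xs" unfolding WJ_def by auto
  hence "ev (rev xs) \<in> WJ J" unfolding WJ_def by (intro CollectI exI[of _ "rev xs"]) auto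
  thus ?thesis using xs J ev_rev1[of xs] ev_rev2[of xs] by auto
qed

lemma WJ_lin: "w \<in> WJ J \<Longrightarrow> w (\<lambda>k. a * x k + b * y k) = (\<lambda>k. a * w x k + b * w y k)"
  unfolding WJ_def using ev_lin by auto

lemma WJ_neg: "w \<in> WJ J \<Longrightarrow> w (\<lambda>k. - x k) = (\<lambda>k. - w x k)"
  unfolding WJ_def using ev_neg by auto

lemma WJ_V: "J \<subseteq> {..<n} \<Longrightarrow> w \<in> WJ J \<Longrightarrow> v \<in> Vs \<Longrightarrow> w v \<in> Vs"
  unfolding WJ_def using ev_V by auto

lemma WJ_inj: "J \<subseteq> {..<n} \<Longrightarrow> w \<in> WJ J \<Longrightarrow> w x = w y \<Longrightarrow> x = y"
  using WJ_inv by (metis comp_apply id_apply)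

lemma lenJ_ex: "w \<in> WJ J \<Longrightarrow> \<exists>xs. length xs = lenJ J w \<and> set xs \<subseteq> J \<and> ev xs = w"
proof -
  assume "w \<in> WJ J"
  then obtain xs where "set xs \<subseteq> J" "ev xs = w" unfolding WJ_def by auto
  hence "\<exists>k xs. length xs = k \<and> set xs \<subseteq> J \<and> ev xs = w" by auto
  from LeastI_ex[OF this] show ?thesis unfolding lenJ_def by auto
qed

lemma lenJ_le: "set xs \<subseteq> J \<Longrightarrow> lenJ J (ev xs) \<le> length xs"
  unfolding lenJ_def by (auto intro: Least_le)

lemma lenJ_mono: "J \<subseteq> K \<Longrightarrow> w \<in> WJ J \<Longrightarrow> lenJ K w \<le> lenJ J w"
  by (metis lenJ_ex lenJ_le order.trans)

lemma lenJ_comp: "x \<in> WJ J \<Longrightarrow> y \<in> WJ J \<Longrightarrow> lenJ J (x \<circ> y) \<le> lenJ J x + lenJ J y"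
proof -
  assume "x \<in> WJ J" "y \<in> WJ J"
  then obtain xs ys where "length xs = lenJ J x" "set xs \<subseteq> J" "ev xs = x"
     "length ys = lenJ J y" "set ys \<subseteq> J" "ev ys = y" using lenJ_ex by metis
  thus ?thesis using lenJ_le[of "xs@ys" J] by (simp add: ev_append)
qed

lemma lenJ_sr: "i \<in> J \<Longrightarrow> lenJ J (sr i) \<le> 1"
  using lenJ_le[of "[i]" J] by simp

lemma lenJ_id: "lenJ J id = 0"
  using lenJ_le[of "[]" J] by simp

lemma lenJ_0: "w \<in> WJ J \<Longrightarrow> lenJ J w = 0 \<Longrightarrow> w = id"
  using lenJ_ex by fastforce

end



fun alt :: "nat \<Rightarrow> nat \<Rightarrow> nat \<Rightarrow> nat list" where
  "alt p q 0 = []"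
| "alt p q (Suc k) = (if even k then q else p) # alt p q k"

definition ak :: "nat \<Rightarrow> nat \<Rightarrow> real" where
  "ak m k = sin (real k * pi / real m) / sin (pi / real m)"

lemma alt_length[simp]: "length (alt p q k) = k"
  by (induction k) auto

lemma alt_set: "set (alt p q k) \<subseteq> {p,q}"
  by (induction k) auto

lemma alt_snoc: "alt q p (Suc k) = alt p q k @ [p]"
  by (induction k) auto

lemma alt_prefix: "alt p q (d + k) = alt (if even k then p else q) (if even k then q else p) d @ alt p q k"
  by (induction d) auto

lemma ak_rec: "ak m (k+2) = 2 * cos (pi / real m) * ak m (k+1) - ak m k"
proof -
  let ?x = "pi / real m"
  have a: "real (k+2) * pi / real m = real (k+1) * ?x + ?x" by (cases "m=0") (simp_all add: field_simps)
  have b: "real k * pi / real m = real (k+1) * ?x - ?x" by (cases "m=0") (simp_all add: field_simps)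
  have c: "real (k+1) * pi / real m = real (k+1) * ?x" by simp
  have "sin (real (k+2) * pi / real m) + sin (real k * pi / real m) = 2 * cos ?x * sin (real (k+1) * pi / real m)"
    unfolding a b c sin_add sin_diff by (simp add: algebra_simps)
  hence "ak m (k+2) + ak m k = 2 * cos ?x * ak m (k+1)"
    unfolding ak_def by (simp add: add_divide_distrib[symmetric])
  thus ?thesis by linarith
qed

lemma sin_pim_pos: "2 \<le> m \<Longrightarrow> sin (pi / real m) > 0"
  by (rule sin_gt_zero) (auto simp: field_simps)

lemma ak_0[simp]: "ak m 0 = 0" by (simp add: ak_def)
lemma ak_1: "2 \<le> m \<Longrightarrow> ak m 1 = 1"
  using sin_pim_pos[of m] by (simp add: ak_def)
lemma ak_Suc0: "2 \<le> m \<Longrightarrow> ak m (Suc 0) = 1"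
  using ak_1 by simp

lemma ak_pos: "0 < k \<Longrightarrow> k < m \<Longrightarrow> ak m k > 0"
proof -
  assume k: "0<k" "k<m"
  hence m: "2 \<le> m \<or> m = 1" by linarith
  have "sin (real k * pi / real m) > 0"
    using k by (intro sin_gt_zero) (auto simp: field_simps)
  moreover have "sin (pi / real m) > 0"
    using k by (intro sin_gt_zero) (auto simp: field_simps)
  ultimately show ?thesis by (simp add: ak_def)
qed

lemma ak_m: "2 \<le> m \<Longrightarrow> ak m m = 0"
  by (simp add: ak_def)

lemma ak_nonneg: "k \<le> m \<Longrightarrow> 2 \<le> m \<Longrightarrow> ak m k \<ge> 0"
  using ak_pos[of k m] ak_m[of m] by (cases "k = 0"; cases "k = m") auto

lemma ak_m1: "2 \<le> m \<Longrightarrow> ak m (m+1) = -1"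
proof -
  assume m: "2 \<le> m"
  have "real (m+1) * pi / real m = pi / real m + pi" using m by (simp add: field_simps)
  thus ?thesis using sin_pim_pos[OF m] by (simp add: ak_def sin_add)
qed

lemma ak_mm1: "2 \<le> m \<Longrightarrow> ak m (m-1) = 1"
proof -
  assume m: "2 \<le> m"
  have "real (m-1) * pi / real m = pi - pi / real m" using m by (simp add: field_simps of_nat_diff)
  thus ?thesis using sin_pim_pos[OF m] by (simp add: ak_def sin_diff)
qed

context coxm
begin

definition ipos :: "nat \<Rightarrow> nat \<Rightarrow> (nat\<Rightarrow>real) \<Rightarrow> bool" where
  "ipos p q x \<longleftrightarrow> (\<exists>a b. a \<ge> 0 \<and> b \<ge> 0 \<and> (a > 0 \<or> b > 0) \<and>
      x = (\<lambda>t. a * simple_root p t + b * simple_root q t))"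

definition ineg :: "nat \<Rightarrow> nat \<Rightarrow> (nat\<Rightarrow>real) \<Rightarrow> bool" where
  "ineg p q x \<longleftrightarrow> ipos p q (\<lambda>t. - x t)"

lemma ipos_swap: "ipos p q x \<longleftrightarrow> ipos q p x"
proof
  assume "ipos p q x"
  then obtain a b where "a \<ge> 0 \<and> b \<ge> 0 \<and> (a > 0 \<or> b > 0) \<and>
      x = (\<lambda>t. a * simple_root p t + b * simple_root q t)" unfolding ipos_def by blast
  thus "ipos q p x" unfolding ipos_def by (intro exI[of _ b] exI[of _ a]) (auto simp: add.commute)
next
  assume "ipos q p x"
  then obtain a b where "a \<ge> 0 \<and> b \<ge> 0 \<and> (a > 0 \<or> b > 0) \<and>
      x = (\<lambda>t. a * simple_root q t + b * simple_root p t)" unfolding ipos_def by blast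
  thus "ipos p q x" unfolding ipos_def by (intro exI[of _ b] exI[of _ a]) (auto simp: add.commute)
qed

lemma ineg_swap: "ineg p q x \<longleftrightarrow> ineg q p x"
  unfolding ineg_def using ipos_swap by blast

lemma ipos_ineg: "p \<noteq> q \<Longrightarrow> ipos p q x \<Longrightarrow> ineg p q x \<Longrightarrow> False"
proof -
  assume pq: "p \<noteq> q" and "ipos p q x" "ineg p q x"
  then obtain a b a' b' where ab: "a \<ge> 0" "b \<ge> 0" "a > 0 \<or> b > 0"
     "x = (\<lambda>t. a * simple_root p t + b * simple_root q t)"
    and ab': "a' \<ge> 0" "b' \<ge> 0" "a' > 0 \<or> b' > 0"
     "(\<lambda>t. - x t) = (\<lambda>t. a' * simple_root p t + b' * simple_root q t)"
    unfolding ipos_def ineg_def by blast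
  have "(\<lambda>t. - x t) p = (\<lambda>t. a' * simple_root p t + b' * simple_root q t) p"
       "(\<lambda>t. - x t) q = (\<lambda>t. a' * simple_root p t + b' * simple_root q t) q"
    using ab'(4) by metis+
  hence "- x p = a'" "- x q = b'" using pq by (auto simp: simple_root_def)
  moreover have "x p = a" "x q = b" using ab(4) pq by (auto simp: simple_root_def)
  ultimately show False using ab ab' by linarith
qed

lemma alt_formula:
  assumes pq: "p<n" "q<n" "p\<noteq>q"
  shows "ev (alt p q k) (simple_root p) =
    (\<lambda>t. ak (M p q) (k+1) * simple_root (if even k then p else q) t
        + ak (M p q) k * simple_root (if even k then q else p) t)"
proof (induction k)
  case 0
  have "2 \<le> M p q" using M_ge2 pq by auto
  thus ?case by (simp add: ak_Suc0)
next
  case (Suc k)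
  have mq: "M q p = M p q" using M_sym pq by auto
  let ?c = "cos (pi / real (M p q))"
  have rec: "ak (M p q) (Suc (Suc k)) = 2 * ?c * ak (M p q) (Suc k) - ak (M p q) k"
    using ak_rec[of "M p q" k] by simp
  show ?case
  proof (cases "even k")
    case True
    have "ev (alt p q (Suc k)) (simple_root p) = sr q (ev (alt p q k) (simple_root p))"
      using True by simp
    also have "\<dots> = (\<lambda>t. ak (M p q) (k+1) * sr q (simple_root p) t + ak (M p q) k * sr q (simple_root q) t)"
      using True by (simp add: Suc sr_lin)
    also have "\<dots> = (\<lambda>t. ak (M p q) (Suc k+1) * simple_root q t + ak (M p q) (Suc k) * simple_root p t)"
      by (rule ext) (simp add: sr_root_self sr_root_other pq mq rec algebra_simps)
    finally show ?thesis using True by simp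
  next
    case False
    have "ev (alt p q (Suc k)) (simple_root p) = sr p (ev (alt p q k) (simple_root p))"
      using False by simp
    also have "\<dots> = (\<lambda>t. ak (M p q) (k+1) * sr p (simple_root q) t + ak (M p q) k * sr p (simple_root p) t)"
      using False by (simp add: Suc sr_lin)
    also have "\<dots> = (\<lambda>t. ak (M p q) (Suc k+1) * simple_root p t + ak (M p q) (Suc k) * simple_root q t)"
      by (rule ext) (simp add: sr_root_self sr_root_other pq mq rec algebra_simps)
    finally show ?thesis using False by simp
  qed
qed

end



context coxm
begin

lemma mge2: "p<n \<Longrightarrow> q<n \<Longrightarrow> p\<noteq>q \<Longrightarrow> 2 \<le> M p q" using M_ge2 by auto

lemma L1:
  assumes pq: "p<n" "q<n" "p\<noteq>q" and k: "k < M p q"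
  shows "ipos p q (ev (alt p q k) (simple_root p))"
proof -
  have m: "2 \<le> M p q" using mge2 pq by auto
  have a1: "ak (M p q) (k+1) \<ge> 0" using k m by (intro ak_nonneg) auto
  have a0: "ak (M p q) k \<ge> 0" using k m by (intro ak_nonneg) auto
  have pos: "ak (M p q) (k+1) > 0 \<or> ak (M p q) k > 0"
    using ak_pos[of k "M p q"] k ak_1[OF m] by (cases "k=0") auto
  show ?thesis
  proof (cases "even k")
    case True
    thus ?thesis unfolding alt_formula[OF pq] ipos_def
      using a1 a0 pos by (intro exI[of _ "ak (M p q) (k+1)"] exI[of _ "ak (M p q) k"]) auto
  next
    case False
    thus ?thesis unfolding alt_formula[OF pq] ipos_def
      using a1 a0 pos by (intro exI[of _ "ak (M p q) k"] exI[of _ "ak (M p q) (k+1)"]) (auto simp: add.commute)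
  qed
qed

lemma L2:
  assumes pq: "p<n" "q<n" "p\<noteq>q" and d: "1 \<le> d" "d \<le> M p q"
  shows "ineg p q (ev (alt q p d) (simple_root p))"
proof -
  have "alt q p d = alt p q (d-1) @ [p]" using alt_snoc[of q p "d-1"] d by simp
  hence "ev (alt q p d) (simple_root p) = ev (alt p q (d-1)) (sr p (simple_root p))"
    by (simp add: ev_snoc)
  also have "\<dots> = (\<lambda>t. - ev (alt p q (d-1)) (simple_root p) t)"
    using pq by (simp add: sr_root_self ev_neg)
  finally show ?thesis unfolding ineg_def using L1[OF pq, of "d-1"] d by simp
qed

lemma eqp:
  assumes pq: "p<n" "q<n" "p\<noteq>q"
  shows "ev (alt p q (M p q)) (simple_root p) = ev (alt q p (M p q)) (simple_root p)"
proof -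
  let ?m = "M p q"
  have m: "2 \<le> ?m" using mge2 pq by auto
  have "alt q p ?m = alt p q (?m-1) @ [p]" using alt_snoc[of q p "?m-1"] m by simp
  hence "ev (alt q p ?m) (simple_root p) = ev (alt p q (?m-1)) (sr p (simple_root p))"
    by (simp add: ev_snoc)
  also have "\<dots> = (\<lambda>t. - ev (alt p q (?m-1)) (simple_root p) t)"
    using pq by (simp add: sr_root_self ev_neg)
  also have "\<dots> = (\<lambda>t. - simple_root (if even (?m-1) then q else p) t)"
  proof -
    have "ak ?m (?m - Suc 0) = 1" using ak_mm1[OF m] by simp
    thus ?thesis unfolding alt_formula[OF pq] using m by (simp add: ak_m)
  qed
  also have "\<dots> = (\<lambda>t. - simple_root (if even ?m then p else q) t)"
    using m by (cases "even ?m") (auto simp: even_diff_nat)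
  also have "\<dots> = ev (alt p q ?m) (simple_root p)"
    unfolding alt_formula[OF pq] using m ak_m1[OF m] by (simp add: ak_m)
  finally show ?thesis by simp
qed

lemma ev_fix: "set ws \<subseteq> {p,q} \<Longrightarrow> cf p y = 0 \<Longrightarrow> cf q y = 0 \<Longrightarrow> ev ws y = y"
proof (induction ws)
  case Nil thus ?case by simp
next
  case (Cons a ws)
  hence "cf a y = 0" by auto
  hence "sr a y = y" by (simp add: sr_apply[abs_def])
  thus ?case using Cons by simp
qed

lemma cos_pim: "2 \<le> m \<Longrightarrow> 0 \<le> cos (pi / real m) \<and> cos (pi / real m) < 1"
proof -
  assume m: "2 \<le> m"
  have a: "0 < pi / real m" using m by simp
  have b: "pi / real m \<le> pi / 2" using m by (intro divide_left_mono) auto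
  have b2: "pi / real m \<le> pi" using b pi_gt_zero by linarith
  have "cos (pi / real m) < cos 0"
    using a b2 by (intro cos_monotone_0_pi) auto
  moreover have "0 \<le> cos (pi / real m)" using a b by (intro cos_ge_zero) auto
  ultimately show ?thesis by simp
qed

lemma braid:
  assumes pq: "p<n" "q<n" "p\<noteq>q"
  shows "ev (alt p q (M p q)) = ev (alt q p (M p q))"
proof
  fix x :: "nat \<Rightarrow> real"
  let ?m = "M p q"
  let ?c = "cos (pi / real ?m)"
  have m: "2 \<le> ?m" using mge2 pq by auto
  have mq: "M q p = ?m" using M_sym pq by auto
  have c: "0 \<le> ?c" "?c < 1" using cos_pim[OF m] by auto
  define D where "D = 1 - ?c * ?c"
  have "?c * ?c \<le> ?c" using c by (intro mult_left_le) auto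
  hence D: "D > 0" unfolding D_def using c by linarith
  define t where "t = (cf p x + ?c * cf q x) / D"
  define u where "u = (cf q x + ?c * cf p x) / D"
  define z where "z = (\<lambda>k. t * simple_root p k + u * simple_root q k)"
  define y where "y = (\<lambda>k. x k - z k)"
  have cpq: "cf p (simple_root q) = - ?c" using cf_root pq by simp
  have cqp: "cf q (simple_root p) = - ?c" using cf_root pq mq by simp
  have "cf p z = t - ?c * u" unfolding z_def cf_lin cf_self[OF pq(1)] cpq by simp
  also have "\<dots> = ((cf p x + ?c * cf q x) - ?c * (cf q x + ?c * cf p x)) / D"
    unfolding t_def u_def by (simp add: diff_divide_distrib)
  also have "\<dots> = (cf p x * D) / D" by (simp add: D_def algebra_simps)
  also have "\<dots> = cf p x" using D by simp
  finally have yp: "cf p y = 0"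
    unfolding y_def using cf_lin[of p 1 x "-1" z] by simp
  have "cf q z = u - ?c * t" unfolding z_def cf_lin cf_self[OF pq(2)] cqp by simp
  also have "\<dots> = ((cf q x + ?c * cf p x) - ?c * (cf p x + ?c * cf q x)) / D"
    unfolding t_def u_def by (simp add: diff_divide_distrib)
  also have "\<dots> = (cf q x * D) / D" by (simp add: D_def algebra_simps)
  also have "\<dots> = cf q x" using D by simp
  finally have yq: "cf q y = 0"
    unfolding y_def using cf_lin[of q 1 x "-1" z] by simp
  have x: "x = (\<lambda>k. 1 * y k + 1 * z k)" unfolding y_def by simp
  have eqq: "ev (alt p q ?m) (simple_root q) = ev (alt q p ?m) (simple_root q)"
    using eqp[of q p] pq mq by simp
  have fx: "ev (alt a b ?m) x = (\<lambda>k. y k + (t * ev (alt a b ?m) (simple_root p) k + u * ev (alt a b ?m) (simple_root q) k))"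
    if "{a,b} = {p,q}" for a b
  proof -
    have s: "set (alt a b ?m) \<subseteq> {p,q}" using alt_set[of a b ?m] that by auto
    show ?thesis
      apply (subst x)
      apply (simp only: ev_lin ev_fix[OF s yp yq])
      apply (simp add: z_def ev_lin)
      done
  qed
  show "ev (alt p q ?m) x = ev (alt q p ?m) x"
  proof -
    have "{q,p} = {p,q}" by auto
    thus ?thesis using fx[of p q] fx[of q p] eqp[OF pq] eqq by simp
  qed
qed

end



context coxm
begin

lemma srsr: "r<n \<Longrightarrow> sr r \<circ> (sr r \<circ> f) = f"
  by (rule ext) (simp add: sr_invol)

lemma reduce:
  assumes pq: "p<n" "q<n" "p\<noteq>q"
  shows "set ws \<subseteq> {p,q} \<Longrightarrow> \<exists>k a b. k \<le> M p q \<and> k \<le> length ws \<and> ((a,b) = (p,q) \<or> (a,b) = (q,p))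
           \<and> ev ws = ev (alt a b k)"
proof (induction ws)
  case Nil
  show ?case by (rule exI[of _ 0], rule exI[of _ p], rule exI[of _ q]) simp
next
  case (Cons r ws)
  then obtain k a b where kab: "k \<le> M p q" "k \<le> length ws" "(a,b) = (p,q) \<or> (a,b) = (q,p)"
     "ev ws = ev (alt a b k)" by auto
  have r: "r \<in> {p,q}" "r < n" using Cons.prems pq by auto
  have ab: "a<n" "b<n" "a\<noteq>b" "M a b = M p q" using kab(3) pq M_sym by auto
  show ?case
  proof (cases k)
    case 0
    show ?thesis
    proof (cases "r = q")
      case True
      thus ?thesis using kab 0 mge2[OF pq]
        by (intro exI[of _ 1] exI[of _ p] exI[of _ q]) auto
    next
      case False
      hence "r = p" using r by auto
      thus ?thesis using kab 0 mge2[OF pq]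
        by (intro exI[of _ 1] exI[of _ q] exI[of _ p]) auto
    qed
  next
    case (Suc j)
    let ?L = "if even j then b else a"
    have altS: "alt a b (Suc j) = ?L # alt a b j" by simp
    show ?thesis
    proof (cases "r = ?L")
      case True
      have "ev (r#ws) = sr r \<circ> (sr r \<circ> ev (alt a b j))"
        using kab(4) Suc True by simp
      also have "\<dots> = ev (alt a b j)" using srsr r by simp
      finally show ?thesis using kab Suc by (intro exI[of _ j] exI[of _ a] exI[of _ b]) auto
    next
      case False
      hence rr: "r = (if even j then a else b)" using r kab(3) by auto
      show ?thesis
      proof (cases "Suc (Suc j) \<le> M p q")
        case True
        have "alt a b (Suc (Suc j)) = r # alt a b (Suc j)" using rr by simp
        hence "ev (r#ws) = ev (alt a b (Suc (Suc j)))" using kab(4) Suc by simp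
        thus ?thesis using kab Suc True by (intro exI[of _ "Suc (Suc j)"] exI[of _ a] exI[of _ b]) auto
      next
        case False
        hence sj: "Suc j = M a b" using kab(1) Suc ab by auto
        have "ev (alt a b (Suc j)) = ev (alt b a (Suc j))" using braid[OF ab(1-3)] sj by simp
        moreover have "alt b a (Suc j) = r # alt b a j" using rr by simp
        ultimately have "ev (r#ws) = sr r \<circ> (sr r \<circ> ev (alt b a j))"
          using kab(4) Suc by simp
        also have "\<dots> = ev (alt b a j)" using srsr r by simp
        finally show ?thesis using kab Suc by (intro exI[of _ j] exI[of _ b] exI[of _ a]) auto
      qed
    qed
  qed
qed

lemma classify:
  assumes pq: "p<n" "q<n" "p\<noteq>q" and u: "u \<in> WJ {p,q}"
  shows "\<exists>k \<le> lenJ {p,q} u. (k < M p q \<and> u = ev (alt p q k)) \<or> (1 \<le> k \<and> k \<le> M p q \<and> u = ev (alt q p k))"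
proof -
  obtain ws where ws: "length ws = lenJ {p,q} u" "set ws \<subseteq> {p,q}" "ev ws = u"
    using lenJ_ex[OF u] by auto
  obtain k a b where kab: "k \<le> M p q" "k \<le> length ws" "(a,b) = (p,q) \<or> (a,b) = (q,p)"
     "ev ws = ev (alt a b k)" using reduce[OF pq ws(2)] by auto
  show ?thesis
  proof (cases "(a,b) = (p,q)")
    case True
    show ?thesis
    proof (cases "k < M p q")
      case True
      thus ?thesis using kab ws \<open>(a,b) = (p,q)\<close> by (intro exI[of _ k]) auto
    next
      case False
      hence "k = M p q" using kab by auto
      hence "u = ev (alt q p k)" using braid[OF pq] kab ws \<open>(a,b) = (p,q)\<close> by auto
      thus ?thesis using kab ws \<open>k = M p q\<close> mge2[OF pq] by (intro exI[of _ k]) auto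
    qed
  next
    case False
    hence ab: "a = q" "b = p" using kab(3) by auto
    show ?thesis
    proof (cases "k = 0")
      case True
      thus ?thesis using kab ws ab mge2[OF pq] by (intro exI[of _ 0]) auto
    next
      case False
      thus ?thesis using kab ws ab by (intro exI[of _ k]) auto
    qed
  qed
qed

lemma ipos_root: "ipos p q (simple_root p)"
  unfolding ipos_def by (intro exI[of _ 1] exI[of _ 0]) auto

lemma ev_alt_W: "p<n \<Longrightarrow> q<n \<Longrightarrow> ev (alt a b k) \<in> WJ {p,q} \<or> \<not> {a,b} \<subseteq> {p,q}"
  unfolding WJ_def using alt_set[of a b k] by blast

lemma alt_in: "{a,b} \<subseteq> J \<Longrightarrow> ev (alt a b k) \<in> WJ J"
  unfolding WJ_def using alt_set[of a b k] by blast

lemma alt_inj: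
  assumes pq: "p<n" "q<n" "p\<noteq>q" and kl: "k < l" "l - k \<le> M p q"
  shows "ev (alt p q k) \<noteq> ev (alt p q l)"
proof
  assume eq: "ev (alt p q k) = ev (alt p q l)"
  define d where "d = l - k"
  define a where "a = (if even k then p else q)"
  define b where "b = (if even k then q else p)"
  have ab: "a<n" "b<n" "a\<noteq>b" "M b a = M p q" using pq M_sym unfolding a_def b_def by auto
  have "alt p q l = alt a b d @ alt p q k" using alt_prefix[of p q d k] kl unfolding a_def b_def d_def by simp
  hence eq2: "ev (alt a b d) \<circ> ev (alt p q k) = ev (alt p q k)" using eq by (simp add: ev_append)
  have X: "ev (alt p q k) \<in> WJ {..<n}" using alt_in[of p q "{..<n}"] pq by auto
  obtain X' where X': "ev (alt p q k) \<circ> X' = id" using WJ_inv[OF _ X] by auto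
  have "ev (alt a b d) (simple_root b) = simple_root b"
    using fun_cong[OF eq2, of "X' (simple_root b)"] fun_cong[OF X', of "simple_root b"] by simp
  moreover have "ineg b a (ev (alt a b d) (simple_root b))"
    using L2[of b a d] ab kl unfolding d_def by auto
  ultimately show False using ipos_ineg[of b a] ipos_root[of b a] ab by auto
qed

lemma WJ_pq:
  assumes pq: "p<n" "q<n" "p\<noteq>q"
  shows "WJ {p,q} = (\<lambda>k. ev (alt p q k)) ` {..<M p q} \<union> (\<lambda>k. ev (alt q p k)) ` {1..M p q}"
proof
  show "WJ {p,q} \<subseteq> (\<lambda>k. ev (alt p q k)) ` {..<M p q} \<union> (\<lambda>k. ev (alt q p k)) ` {1..M p q}"
    using classify[OF pq] by fastforce
  show "(\<lambda>k. ev (alt p q k)) ` {..<M p q} \<union> (\<lambda>k. ev (alt q p k)) ` {1..M p q} \<subseteq> WJ {p,q}"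
    using alt_in[of p q "{p,q}"] alt_in[of q p "{p,q}"] by auto
qed

lemma card_WJ_pq:
  assumes pq: "p<n" "q<n" "p\<noteq>q"
  shows "card (WJ {p,q}) = 2 * M p q"
proof -
  let ?m = "M p q"
  have i1: "inj_on (\<lambda>k. ev (alt p q k)) {..<?m}"
  proof (rule inj_onI)
    fix k l assume kl: "k \<in> {..<?m}" "l \<in> {..<?m}" "ev (alt p q k) = ev (alt p q l)"
    show "k = l"
    proof (rule ccontr)
      assume "k \<noteq> l"
      hence "k < l \<or> l < k" by auto
      moreover have "l - k \<le> ?m" "k - l \<le> ?m" using kl by auto
      ultimately show False using alt_inj[OF pq, of k l] alt_inj[OF pq, of l k] kl by auto
    qed
  qed
  have qp: "q<n" "p<n" "q\<noteq>p" "M q p = ?m" using pq M_sym by auto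
  have i2: "inj_on (\<lambda>k. ev (alt q p k)) {1..?m}"
  proof (rule inj_onI)
    fix k l assume kl: "k \<in> {1..?m}" "l \<in> {1..?m}" "ev (alt q p k) = ev (alt q p l)"
    show "k = l"
    proof (rule ccontr)
      assume "k \<noteq> l"
      hence "k < l \<or> l < k" by auto
      moreover have "l - k \<le> ?m" "k - l \<le> ?m" using kl by auto
      ultimately show False using alt_inj[OF qp(1-3), of k l] alt_inj[OF qp(1-3), of l k] qp(4) kl by auto
    qed
  qed
  have disj: "(\<lambda>k. ev (alt p q k)) ` {..<?m} \<inter> (\<lambda>k. ev (alt q p k)) ` {1..?m} = {}"
  proof (rule ccontr)
    assume "\<not> ?thesis"
    then obtain k l where kl: "k < ?m" "1 \<le> l" "l \<le> ?m" "ev (alt p q k) = ev (alt q p l)" by auto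
    have "ipos p q (ev (alt p q k) (simple_root p))" using L1[OF pq kl(1)] .
    moreover have "ineg p q (ev (alt q p l) (simple_root p))" using L2[OF pq kl(2,3)] .
    ultimately show False using kl(4) ipos_ineg pq by metis
  qed
  have "card (WJ {p,q}) = card ((\<lambda>k. ev (alt p q k)) ` {..<?m}) + card ((\<lambda>k. ev (alt q p k)) ` {1..?m})"
    unfolding WJ_pq[OF pq] by (rule card_Un_disjoint) (use disj in auto)
  also have "\<dots> = ?m + ?m" using card_image[OF i1] card_image[OF i2] by simp
  finally show ?thesis by simp
qed

lemma DL:
  assumes pq: "p<n" "q<n" "p\<noteq>q" and u: "u \<in> WJ {p,q}"
    and len: "lenJ {p,q} u \<le> lenJ {p,q} (u \<circ> sr p)"
  shows "ipos p q (u (simple_root p))"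
proof -
  obtain k where k: "k \<le> lenJ {p,q} u"
    "(k < M p q \<and> u = ev (alt p q k)) \<or> (1 \<le> k \<and> k \<le> M p q \<and> u = ev (alt q p k))"
    using classify[OF pq u] by auto
  show ?thesis
  proof (cases "k < M p q \<and> u = ev (alt p q k)")
    case True thus ?thesis using L1[OF pq] by auto
  next
    case False
    hence k2: "1 \<le> k" "u = ev (alt q p k)" using k by auto
    have "alt q p k = alt p q (k-1) @ [p]" using alt_snoc[of q p "k-1"] k2 by simp
    hence "u \<circ> sr p = ev (alt p q (k-1)) \<circ> (sr p \<circ> sr p)" using k2 by (simp add: ev_snoc comp_assoc)
    also have "sr p \<circ> sr p = id" using pq by (auto simp: sr_invol)
    finally have e: "u \<circ> sr p = ev (alt p q (k-1))" by (simp add: comp_def)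
    have "lenJ {p,q} (u \<circ> sr p) \<le> k - 1" unfolding e using lenJ_le[OF alt_set[of p q "k-1"]] by simp
    thus ?thesis using len k(1) k2 by linarith
  qed
qed

lemma dih_sign:
  assumes pq: "p<n" "q<n" "p\<noteq>q" and u: "u \<in> WJ {p,q}"
  shows "ipos p q (u (simple_root p)) \<or> ineg p q (u (simple_root p))"
  using classify[OF pq u] L1[OF pq] L2[OF pq] by blast

lemma dih_pospos:
  assumes pq: "p<n" "q<n" "p\<noteq>q" and u: "u \<in> WJ {p,q}"
    and a: "ipos p q (u (simple_root p))" and b: "ipos p q (u (simple_root q))"
  shows "u = id"
proof -
  have qp: "q<n" "p<n" "q\<noteq>p" "M q p = M p q" using pq M_sym by auto
  obtain k where k: "(k < M p q \<and> u = ev (alt p q k)) \<or> (1 \<le> k \<and> k \<le> M p q \<and> u = ev (alt q p k))"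
    using classify[OF pq u] by auto
  show ?thesis
  proof (cases "k < M p q \<and> u = ev (alt p q k)")
    case True
    show ?thesis
    proof (cases "k = 0")
      case True thus ?thesis using \<open>k < M p q \<and> u = ev (alt p q k)\<close> by simp
    next
      case False
      hence "ineg q p (ev (alt p q k) (simple_root q))" using L2[OF qp(1-3), of k] True qp(4) by auto
      hence "ineg p q (u (simple_root q))" using True ineg_swap by auto
      thus ?thesis using b ipos_ineg pq by blast
    qed
  next
    case False
    hence "ineg p q (u (simple_root p))" using k L2[OF pq] by auto
    thus ?thesis using a ipos_ineg pq by blast
  qed
qed

lemma dih_negneg:
  assumes pq: "p<n" "q<n" "p\<noteq>q" and u: "u \<in> WJ {p,q}"
    and a: "ineg p q (u (simple_root p))" and b: "ineg p q (u (simple_root q))"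
  shows "u = ev (alt p q (M p q))"
proof -
  have qp: "q<n" "p<n" "q\<noteq>p" "M q p = M p q" using pq M_sym by auto
  obtain k where k: "(k < M p q \<and> u = ev (alt p q k)) \<or> (1 \<le> k \<and> k \<le> M p q \<and> u = ev (alt q p k))"
    using classify[OF pq u] by auto
  show ?thesis
  proof (cases "k < M p q \<and> u = ev (alt p q k)")
    case True
    hence "ipos p q (u (simple_root p))" using L1[OF pq] by auto
    thus ?thesis using a ipos_ineg pq by blast
  next
    case False
    hence k2: "1 \<le> k" "k \<le> M p q" "u = ev (alt q p k)" using k by auto
    show ?thesis
    proof (cases "k < M p q")
      case True
      hence "ipos q p (u (simple_root q))" using L1[OF qp(1-3), of k] qp(4) k2 by auto
      hence "ipos p q (u (simple_root q))" using ipos_swap by auto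
      thus ?thesis using b ipos_ineg pq by blast
    next
      case False
      hence "k = M p q" using k2 by auto
      thus ?thesis using k2 braid[OF pq] by simp
    qed
  qed
qed

lemma w0_neg:
  assumes pq: "p<n" "q<n" "p\<noteq>q"
  shows "ineg p q (ev (alt p q (M p q)) (simple_root p))"
    and "ineg p q (ev (alt p q (M p q)) (simple_root q))"
proof -
  have qp: "q<n" "p<n" "q\<noteq>p" "M q p = M p q" using pq M_sym by auto
  show "ineg p q (ev (alt p q (M p q)) (simple_root p))"
    using L2[OF pq, of "M p q"] braid[OF pq] mge2[OF pq] by simp
  have "ineg q p (ev (alt p q (M q p)) (simple_root q))"
    using L2[OF qp(1-3), of "M q p"] mge2[OF qp(1-3)] by simp
  thus "ineg p q (ev (alt p q (M p q)) (simple_root q))" using qp(4) ineg_swap by simp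
qed

end



context coxm
begin

definition pos :: "(nat\<Rightarrow>real) \<Rightarrow> bool" where "pos x \<longleftrightarrow> (\<forall>k. x k \<ge> 0)"
definition neg :: "(nat\<Rightarrow>real) \<Rightarrow> bool" where "neg x \<longleftrightarrow> (\<forall>k. x k \<le> 0)"

abbreviation "Wf \<equiv> WJ {..<n}"
abbreviation "len \<equiv> lenJ {..<n}"

lemma sr_ne_id: "j<n \<Longrightarrow> sr j \<noteq> id"
proof
  assume j: "j<n" and "sr j = id"
  hence "(\<lambda>k. - simple_root j k) = simple_root j" using sr_root_self[OF j] by simp
  hence "- simple_root j j = simple_root j j" by metis
  thus False by (simp add: simple_root_def)
qed

lemma lenJ_sr1: "j \<in> J \<Longrightarrow> j < n \<Longrightarrow> lenJ J (sr j) = 1"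
proof -
  assume j: "j \<in> J" "j<n"
  have "lenJ J (sr j) \<noteq> 0" using lenJ_0[OF WJ_sr[OF j(1)]] sr_ne_id[OF j(2)] by auto
  thus ?thesis using lenJ_sr[OF j(1)] by simp
qed

lemma Wf_zero: "w \<in> WJ J \<Longrightarrow> w (\<lambda>k. 0) = (\<lambda>k. 0)"
  using WJ_lin[of w J 0 "\<lambda>k. 0" 0 "\<lambda>k. 0"] by simp

lemma root_ne0: "simple_root i \<noteq> (\<lambda>k. 0)"
proof
  assume "simple_root i = (\<lambda>k. 0)"
  hence "simple_root i i = 0" by metis
  thus False by (simp add: simple_root_def)
qed

lemma Wf_root_ne0: "w \<in> Wf \<Longrightarrow> w (simple_root i) \<noteq> (\<lambda>k. 0)"
  using WJ_inj[of "{..<n}" w "simple_root i" "\<lambda>k. 0"] Wf_zero[of w] root_ne0 by auto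

lemma pos_neg_0: "pos x \<Longrightarrow> neg x \<Longrightarrow> x = (\<lambda>k. 0)"
  unfolding pos_def neg_def by (rule ext) (meson order_antisym)

theorem humph:
  assumes "w \<in> Wf" "i<n" "len w \<le> len (w \<circ> sr i)"
  shows "pos (w (simple_root i))"
  using assms
proof (induction "len w" arbitrary: w i rule: less_induct)
  case less
  note w = less.prems(1) and i = less.prems(2) and hl = less.prems(3)
  show ?case
  proof (cases "len w = 0")
    case True
    hence "w = id" using lenJ_0[OF w] by simp
    thus ?thesis by (simp add: pos_def simple_root_def)
  next
    case False
    obtain xs where xs: "length xs = len w" "set xs \<subseteq> {..<n}" "ev xs = w" using lenJ_ex[OF w] by blast
    then obtain ys j where yj: "xs = ys @ [j]" using False by (metis length_0_conv rev_exhaust)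
    have j: "j<n" using xs yj by auto
    have "w \<circ> sr j = ev ys \<circ> (sr j \<circ> sr j)" using xs(3) yj by (auto simp: ev_snoc comp_assoc)
    also have "sr j \<circ> sr j = id" using j by (auto simp: sr_invol)
    finally have wj: "w \<circ> sr j = ev ys" by (simp add: comp_def)
    have lwj: "len (w \<circ> sr j) \<le> len w - 1" unfolding wj using lenJ_le[of ys "{..<n}"] xs yj by simp
    have ji: "j \<noteq> i" using lwj hl False by auto
    let ?I = "{i,j}"
    have Isub: "?I \<subseteq> {..<n}" using i j by auto
    define A where "A = {v \<in> Wf. \<exists>u \<in> WJ ?I. w = v \<circ> u \<and> len v + lenJ ?I u = len w}"
    have wA: "w \<in> A" unfolding A_def using w WJ_id[of ?I] lenJ_id[of ?I] by (auto intro!: bexI[of _ id])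
    obtain v where vA: "v \<in> A" and vmin: "\<And>v'. v' \<in> A \<Longrightarrow> len v \<le> len v'"
      using ex_has_least_nat[of "\<lambda>v. v \<in> A" w len] wA by blast
    obtain u where v: "v \<in> Wf" and u: "u \<in> WJ ?I" "w = v \<circ> u" "len v + lenJ ?I u = len w"
      using vA unfolding A_def by blast
    have srW: "\<And>k. k<n \<Longrightarrow> sr k \<in> Wf" by (rule WJ_sr) auto
    have lenI: "\<And>x. x \<in> WJ ?I \<Longrightarrow> len x \<le> lenJ ?I x" using lenJ_mono[OF Isub] by blast
    have WIW: "\<And>x. x \<in> WJ ?I \<Longrightarrow> x \<in> Wf" using WJ_mono[OF Isub] by blast
    have "w \<circ> sr j \<in> A"
    proof -
      have "len w \<le> len (w \<circ> sr j) + 1"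
      proof -
        have "w = (w \<circ> sr j) \<circ> sr j" using j by (simp add: comp_assoc srsr[symmetric] comp_def sr_invol)
        hence "len w \<le> len (w \<circ> sr j) + len (sr j)"
          by (metis lenJ_comp WJ_comp w srW j)
        thus ?thesis using lenJ_sr[of j "{..<n}"] j by simp
      qed
      moreover have "lenJ ?I (sr j) = 1" using lenJ_sr1 j by auto
      moreover have "w = (w \<circ> sr j) \<circ> sr j" using j by (simp add: comp_assoc srsr[symmetric] comp_def sr_invol)
      ultimately show ?thesis unfolding A_def using lwj w srW[OF j] WJ_comp[of w _ "sr j"] WJ_sr[of j ?I] False
        by (intro CollectI conjI bexI[of _ "sr j"]) auto
    qed
    hence vlt: "len v < len w" using vmin[of "w \<circ> sr j"] lwj False by linarith
    have nod: "len v \<le> len (v \<circ> sr k)" if k: "k \<in> ?I" for k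
    proof (rule ccontr)
      assume "\<not> ?thesis"
      hence lt: "len (v \<circ> sr k) < len v" by simp
      have kn: "k<n" using k Isub by auto
      have vk: "v \<circ> sr k \<in> Wf" using WJ_comp[OF v srW[OF kn]] .
      have sku: "sr k \<circ> u \<in> WJ ?I" using WJ_comp[OF WJ_sr[OF k] u(1)] .
      have eq: "w = (v \<circ> sr k) \<circ> (sr k \<circ> u)" using u(2) kn by (simp add: comp_assoc srsr)
      have "len w \<le> len (v \<circ> sr k) + len (sr k \<circ> u)" using eq lenJ_comp vk WIW[OF sku] by metis
      also have "\<dots> \<le> len (v \<circ> sr k) + lenJ ?I (sr k \<circ> u)" using lenI[OF sku] by simp
      finally have le1: "len w \<le> len (v \<circ> sr k) + lenJ ?I (sr k \<circ> u)" .
      have "lenJ ?I (sr k \<circ> u) \<le> lenJ ?I (sr k) + lenJ ?I u" using lenJ_comp[OF WJ_sr[OF k] u(1)] .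
      hence "lenJ ?I (sr k \<circ> u) \<le> 1 + lenJ ?I u" using lenJ_sr[OF k] by simp
      hence "len (v \<circ> sr k) + lenJ ?I (sr k \<circ> u) = len w" using le1 lt u(3) by linarith
      hence "v \<circ> sr k \<in> A" unfolding A_def using vk sku eq by blast
      thus False using vmin lt by fastforce
    qed
    have pv: "pos (v (simple_root k))" if k: "k \<in> ?I" for k
      using less.hyps[OF vlt v _ nod[OF k]] k Isub by auto
    have "lenJ ?I u \<le> lenJ ?I (u \<circ> sr i)"
    proof (rule ccontr)
      assume "\<not> ?thesis"
      hence lt: "lenJ ?I (u \<circ> sr i) < lenJ ?I u" by simp
      have usi: "u \<circ> sr i \<in> WJ ?I" using WJ_comp[OF u(1) WJ_sr[of i ?I]] by simp
      have "w \<circ> sr i = v \<circ> (u \<circ> sr i)" using u(2) by (simp add: comp_assoc)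
      hence "len (w \<circ> sr i) \<le> len v + len (u \<circ> sr i)" using lenJ_comp v WIW[OF usi] by metis
      also have "\<dots> \<le> len v + lenJ ?I (u \<circ> sr i)" using lenI[OF usi] by simp
      finally show False using lt u(3) hl by linarith
    qed
    hence "ipos i j (u (simple_root i))" using DL[OF i j ji[symmetric] _] u(1) by (simp add: insert_commute)
    then obtain a b where ab: "a \<ge> 0" "b \<ge> 0" "u (simple_root i) = (\<lambda>t. a * simple_root i t + b * simple_root j t)"
      unfolding ipos_def by blast
    have "w (simple_root i) = (\<lambda>t. a * v (simple_root i) t + b * v (simple_root j) t)"
      using u(2) ab(3) WJ_lin[OF v] by simp
    thus ?thesis using pv[of i] pv[of j] ab unfolding pos_def by auto
  qed
qed

lemma neg_uminus: "neg (\<lambda>k. - x k) \<longleftrightarrow> pos x" unfolding neg_def pos_def by auto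
lemma pos_uminus: "pos (\<lambda>k. - x k) \<longleftrightarrow> neg x" unfolding neg_def pos_def by auto

corollary dichot:
  assumes w: "w \<in> Wf" and i: "i<n"
  shows "pos (w (simple_root i)) \<noteq> neg (w (simple_root i))"
proof -
  have excl: "\<not> (pos (w (simple_root i)) \<and> neg (w (simple_root i)))"
    using pos_neg_0 Wf_root_ne0[OF w] by blast
  have srW: "sr i \<in> Wf" using WJ_sr i by auto
  have "pos (w (simple_root i)) \<or> neg (w (simple_root i))"
  proof (cases "len w \<le> len (w \<circ> sr i)")
    case True thus ?thesis using humph[OF w i] by auto
  next
    case False
    have w': "w \<circ> sr i \<in> Wf" using WJ_comp[OF w srW] .
    have "(w \<circ> sr i) \<circ> sr i = w" using i by (simp add: comp_assoc srsr[symmetric] comp_def sr_invol)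
    hence "pos ((w \<circ> sr i) (simple_root i))" using humph[OF w' i] False by simp
    hence "pos (w (\<lambda>k. - simple_root i k))" using sr_root_self[OF i] by simp
    thus ?thesis using WJ_neg[OF w] pos_uminus by simp
  qed
  thus ?thesis using excl by blast
qed

end



locale coxf = coxm +
  assumes finW: "finite (WJ {..<n})"
begin

lemma srW: "k<n \<Longrightarrow> sr k \<in> Wf" by (rule WJ_sr) auto

lemma neg_flip: "w \<in> Wf \<Longrightarrow> i<n \<Longrightarrow> neg ((w \<circ> sr i) (simple_root i)) \<longleftrightarrow> \<not> neg (w (simple_root i))"
proof -
  assume w: "w \<in> Wf" and i: "i<n"
  have "(w \<circ> sr i) (simple_root i) = (\<lambda>k. - w (simple_root i) k)"
    using sr_root_self[OF i] WJ_neg[OF w] by simp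
  hence "neg ((w \<circ> sr i) (simple_root i)) \<longleftrightarrow> pos (w (simple_root i))" using neg_uminus by simp
  thus ?thesis using dichot[OF w i] by blast
qed

lemma F1:
  assumes i: "i<n"
  shows "2 * card {w\<in>Wf. neg (w (simple_root i))} = card Wf"
proof -
  let ?N = "{w\<in>Wf. neg (w (simple_root i))}"
  let ?f = "\<lambda>w. w \<circ> sr i"
  have ff: "\<And>w. ?f (?f w) = w" using i by (simp add: comp_assoc srsr[symmetric] comp_def sr_invol)
  have fW: "\<And>w. w \<in> Wf \<Longrightarrow> ?f w \<in> Wf" using WJ_comp srW[OF i] by blast
  have "bij_betw ?f ?N (Wf - ?N)"
  proof (rule bij_betw_byWitness[of _ ?f])
    show "\<forall>a\<in>?N. ?f (?f a) = a" "\<forall>a\<in>Wf - ?N. ?f (?f a) = a" using ff by auto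
    show "?f ` ?N \<subseteq> Wf - ?N" using neg_flip[OF _ i] fW by auto
    show "?f ` (Wf - ?N) \<subseteq> ?N" using neg_flip[OF _ i] fW by auto
  qed
  hence "card ?N = card (Wf - ?N)" by (rule bij_betw_same_card)
  moreover have "card Wf = card ?N + card (Wf - ?N)"
    using card_Diff_subset[of ?N Wf] finW card_mono[of Wf ?N] by (auto simp: finite_subset)
  ultimately show ?thesis by simp
qed

lemma ipos_ne0: "p \<noteq> q \<Longrightarrow> ipos p q x \<Longrightarrow> x \<noteq> (\<lambda>k. 0)"
proof
  assume pq: "p\<noteq>q" and "ipos p q x" and x0: "x = (\<lambda>k. 0)"
  then obtain a b where ab: "a \<ge> 0" "b \<ge> 0" "a > 0 \<or> b > 0" "x = (\<lambda>t. a * simple_root p t + b * simple_root q t)"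
    unfolding ipos_def by blast
  have "x p = a" "x q = b" using ab(4) pq by (auto simp: simple_root_def)
  thus False using x0 ab(3) by auto
qed

lemma ipos_img:
  assumes v: "v \<in> Wf" and pq: "p \<noteq> q" and vp: "pos (v (simple_root p))" and vq: "pos (v (simple_root q))"
    and x: "ipos p q x"
  shows "pos (v x) \<and> \<not> neg (v x)"
proof -
  obtain a b where ab: "a \<ge> 0" "b \<ge> 0" "x = (\<lambda>t. a * simple_root p t + b * simple_root q t)"
    using x unfolding ipos_def by blast
  have vx: "v x = (\<lambda>t. a * v (simple_root p) t + b * v (simple_root q) t)" using ab(3) WJ_lin[OF v] by simp
  have p: "pos (v x)" unfolding vx using vp vq ab unfolding pos_def by auto
  have "v x \<noteq> (\<lambda>k. 0)" using WJ_inj[of "{..<n}" v x "\<lambda>k. 0"] v Wf_zero[OF v] ipos_ne0[OF pq x] by auto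
  thus ?thesis using p pos_neg_0 by blast
qed

lemma ineg_img:
  assumes v: "v \<in> Wf" and pq: "p \<noteq> q" and vp: "pos (v (simple_root p))" and vq: "pos (v (simple_root q))"
    and x: "ineg p q x"
  shows "neg (v x) \<and> \<not> pos (v x)"
proof -
  have "pos (v (\<lambda>k. - x k)) \<and> \<not> neg (v (\<lambda>k. - x k))"
    using ipos_img[OF v pq vp vq] x unfolding ineg_def by blast
  thus ?thesis using WJ_neg[OF v] pos_uminus neg_uminus by simp
qed

lemma F2:
  assumes i: "i<n" and j: "j<n" and ij: "i \<noteq> j"
  shows "card {w\<in>Wf. neg (w (simple_root i)) \<and> neg (w (simple_root j))} * (2 * M i j) = card Wf"
proof -
  let ?I = "{i,j}"
  let ?WI = "WJ ?I"
  have Isub: "?I \<subseteq> {..<n}" using i j by auto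
  have WIW: "\<And>x. x \<in> ?WI \<Longrightarrow> x \<in> Wf" using WJ_mono[OF Isub] by blast
  have ji: "WJ {j,i} = ?WI" by (simp add: insert_commute)
  define R where "R = {v \<in> Wf. pos (v (simple_root i)) \<and> pos (v (simple_root j))}"
  define \<phi> :: "((nat\<Rightarrow>real) \<Rightarrow> (nat\<Rightarrow>real)) \<times> ((nat\<Rightarrow>real) \<Rightarrow> (nat\<Rightarrow>real)) \<Rightarrow> ((nat\<Rightarrow>real) \<Rightarrow> (nat\<Rightarrow>real))"
    where "\<phi> = (\<lambda>(v,x). v \<circ> x)"
  have cWI: "card ?WI = 2 * M i j" using card_WJ_pq[OF i j ij] .
  have finWI: "finite ?WI" using cWI mge2[OF i j ij] card_ge_0_finite[of ?WI] by linarith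
  have sgi: "neg (v (x (simple_root i))) \<longleftrightarrow> ineg i j (x (simple_root i))" if v: "v \<in> R" and x: "x \<in> ?WI" for v x
  proof -
    have vv: "v \<in> Wf" "pos (v (simple_root i))" "pos (v (simple_root j))" using v R_def by auto
    show ?thesis using dih_sign[OF i j ij x] ipos_img[OF vv(1) ij vv(2,3)] ineg_img[OF vv(1) ij vv(2,3)] by blast
  qed
  have sgj: "neg (v (x (simple_root j))) \<longleftrightarrow> ineg i j (x (simple_root j))" if v: "v \<in> R" and x: "x \<in> ?WI" for v x
  proof -
    have vv: "v \<in> Wf" "pos (v (simple_root i))" "pos (v (simple_root j))" using v R_def by auto
    have x': "x \<in> WJ {j,i}" using x ji by simp
    show ?thesis using dih_sign[OF j i ij[symmetric] x'] ipos_img[OF vv(1) ij vv(2,3)] ineg_img[OF vv(1) ij vv(2,3)]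
        ipos_swap ineg_swap by blast
  qed
  have sgpi: "pos (v (x (simple_root i))) \<Longrightarrow> ipos i j (x (simple_root i))" if v: "v \<in> R" and x: "x \<in> ?WI" for v x
  proof -
    have vv: "v \<in> Wf" "pos (v (simple_root i))" "pos (v (simple_root j))" using v R_def by auto
    show "pos (v (x (simple_root i))) \<Longrightarrow> ipos i j (x (simple_root i))"
      using dih_sign[OF i j ij x] ineg_img[OF vv(1) ij vv(2,3)] by blast
  qed
  have sgpj: "pos (v (x (simple_root j))) \<Longrightarrow> ipos i j (x (simple_root j))" if v: "v \<in> R" and x: "x \<in> ?WI" for v x
  proof -
    have vv: "v \<in> Wf" "pos (v (simple_root i))" "pos (v (simple_root j))" using v R_def by auto
    have x': "x \<in> WJ {j,i}" using x ji by simp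
    show "pos (v (x (simple_root j))) \<Longrightarrow> ipos i j (x (simple_root j))"
      using dih_sign[OF j i ij[symmetric] x'] ineg_img[OF vv(1) ij vv(2,3)] ipos_swap ineg_swap by blast
  qed
  have bij: "bij_betw \<phi> (R \<times> ?WI) Wf"
  proof (rule bij_betw_imageI)
    show "inj_on \<phi> (R \<times> ?WI)"
    proof (rule inj_onI)
      fix z z' assume z: "z \<in> R \<times> ?WI" and z': "z' \<in> R \<times> ?WI" and e: "\<phi> z = \<phi> z'"
      obtain v x where vx: "z = (v,x)" "v \<in> R" "x \<in> ?WI" using z by auto
      obtain v' x' where vx': "z' = (v',x')" "v' \<in> R" "x' \<in> ?WI" using z' by auto
      have e2: "v \<circ> x = v' \<circ> x'" using e vx vx' \<phi>_def by simp
      obtain x'' where x'': "x'' \<in> ?WI" "x' \<circ> x'' = id" using WJ_inv[OF Isub vx'(3)] by auto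
      define y where "y = x \<circ> x''"
      have y: "y \<in> ?WI" using WJ_comp vx(3) x''(1) y_def by auto
      have vy: "v' = v \<circ> y" unfolding y_def using e2 x''(2) by (metis comp_assoc comp_id)
      have "ipos i j (y (simple_root i))"
        using sgpi[OF vx(2) y] vx'(2) vy unfolding R_def by auto
      moreover have "ipos i j (y (simple_root j))"
        using sgpj[OF vx(2) y] vx'(2) vy unfolding R_def by auto
      ultimately have "y = id" using dih_pospos[OF i j ij y] by blast
      hence vv: "v' = v" using vy by simp
      have "x = x'"
      proof
        fix t
        have "v (x t) = v (x' t)" using e2 vv by (metis comp_apply)
        thus "x t = x' t" using WJ_inj[OF _ _ ] vx(2) R_def by (metis (no_types, lifting) lessThan_iff mem_Collect_eq subsetI)
      qed
      thus "z = z'" using vx vx' vv by simp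
    qed
    show "\<phi> ` (R \<times> ?WI) = Wf"
    proof
      show "\<phi> ` (R \<times> ?WI) \<subseteq> Wf" unfolding \<phi>_def R_def using WJ_comp WIW by auto
      show "Wf \<subseteq> \<phi> ` (R \<times> ?WI)"
      proof
        fix w assume w: "w \<in> Wf"
        let ?C = "(\<lambda>x. w \<circ> x) ` ?WI"
        have "w \<in> ?C" using WJ_id[of ?I] by (intro image_eqI[of _ _ id]) auto
        then obtain v where vC: "v \<in> ?C" and vmin: "\<And>v'. v' \<in> ?C \<Longrightarrow> len v \<le> len v'"
          using ex_has_least_nat[of "\<lambda>v. v \<in> ?C" w len] by blast
        obtain x0 where x0: "x0 \<in> ?WI" "v = w \<circ> x0" using vC by auto
        have vW: "v \<in> Wf" using x0 WJ_comp[OF w WIW[OF x0(1)]] by simp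
        have pk: "pos (v (simple_root k))" if k: "k \<in> ?I" for k
        proof -
          have kn: "k<n" using k Isub by auto
          have "v \<circ> sr k = w \<circ> (x0 \<circ> sr k)" using x0 by (simp add: comp_assoc)
          moreover have "x0 \<circ> sr k \<in> ?WI" using WJ_comp[OF x0(1) WJ_sr[OF k]] .
          ultimately have "v \<circ> sr k \<in> ?C" by auto
          hence "len v \<le> len (v \<circ> sr k)" using vmin by blast
          thus ?thesis using humph[OF vW kn] by blast
        qed
        hence vR: "v \<in> R" unfolding R_def using vW by auto
        obtain x1 where x1: "x1 \<in> ?WI" "x0 \<circ> x1 = id" using WJ_inv[OF Isub x0(1)] by auto
        have "w = v \<circ> x1" using x0(2) x1(2) by (metis comp_assoc comp_id)
        thus "w \<in> \<phi> ` (R \<times> ?WI)" using vR x1(1) \<phi>_def by force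
      qed
    qed
  qed
  define w0 where "w0 = ev (alt i j (M i j))"
  have w0: "w0 \<in> ?WI" unfolding w0_def using alt_in[of i j ?I] by simp
  let ?P = "\<lambda>w. neg (w (simple_root i)) \<and> neg (w (simple_root j))"
  have Pphi: "?P (\<phi> (v,x)) \<longleftrightarrow> x = w0" if v: "v \<in> R" and x: "x \<in> ?WI" for v x
  proof -
    have "?P (\<phi> (v,x)) \<longleftrightarrow> ineg i j (x (simple_root i)) \<and> ineg i j (x (simple_root j))"
      using sgi[OF v x] sgj[OF v x] \<phi>_def by simp
    also have "\<dots> \<longleftrightarrow> x = w0" using dih_negneg[OF i j ij x] w0_neg[OF i j ij] unfolding w0_def by blast
    finally show ?thesis .
  qed
  have bij2: "bij_betw \<phi> (R \<times> {w0}) {w\<in>Wf. ?P w}"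
  proof (rule bij_betw_subset[OF bij])
    show "R \<times> {w0} \<subseteq> R \<times> ?WI" using w0 by auto
    show "\<phi> ` (R \<times> {w0}) = {w \<in> Wf. ?P w}"
    proof
      show "\<phi> ` (R \<times> {w0}) \<subseteq> {w \<in> Wf. ?P w}" using Pphi w0 bij bij_betw_apply by fastforce
      show "{w \<in> Wf. ?P w} \<subseteq> \<phi> ` (R \<times> {w0})"
      proof
        fix w assume w: "w \<in> {w \<in> Wf. ?P w}"
        hence "w \<in> \<phi> ` (R \<times> ?WI)" using bij unfolding bij_betw_def by auto
        then obtain z where z: "z \<in> R \<times> ?WI" "w = \<phi> z" by blast
        obtain v x where "z = (v,x)" "v \<in> R" "x \<in> ?WI" using z by auto
        thus "w \<in> \<phi> ` (R \<times> {w0})" using Pphi w z by auto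
      qed
    qed
  qed
  have "card {w\<in>Wf. ?P w} = card R" using bij_betw_same_card[OF bij2] by (simp add: card_cartesian_product)
  moreover have "card Wf = card R * card ?WI" using bij_betw_same_card[OF bij] by (simp add: card_cartesian_product)
  ultimately show ?thesis using cWI by simp
qed

end



lemma var_finite:
  fixes f :: "'a \<Rightarrow> real"
  assumes "finite A" "A \<noteq> {}"
  shows "(\<Sum>a\<in>A. (f a - sum f A / card A)\<^sup>2) / card A = (\<Sum>a\<in>A. (f a)\<^sup>2) / card A - (sum f A / card A)\<^sup>2"
proof -
  let ?c = "real (card A)" and ?m = "sum f A / card A"
  have c: "?c > 0" using assms by (simp add: card_gt_0_iff)
  have "(\<Sum>a\<in>A. (f a - ?m)\<^sup>2) = (\<Sum>a\<in>A. ((f a)\<^sup>2 - 2 * ?m * f a) + ?m\<^sup>2)"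
    by (rule sum.cong) (simp_all add: power2_diff)
  also have "\<dots> = (\<Sum>a\<in>A. (f a)\<^sup>2 - 2 * ?m * f a) + ?c * ?m\<^sup>2"
    by (simp add: sum.distrib)
  also have "(\<Sum>a\<in>A. (f a)\<^sup>2 - 2 * ?m * f a) = (\<Sum>a\<in>A. (f a)\<^sup>2) - 2 * ?m * sum f A"
    by (simp add: sum_subtractf sum_distrib_left)
  also have "?c * ?m\<^sup>2 = ?m * sum f A" using c by (simp add: power2_eq_square)
  finally have "(\<Sum>a\<in>A. (f a - ?m)\<^sup>2) = (\<Sum>a\<in>A. (f a)\<^sup>2) - ?m * sum f A" by simp
  thus ?thesis using c by (simp add: field_simps power2_eq_square)
qed

context coxf
begin

lemma negroot_iff: "w \<in> Wf \<Longrightarrow> i<n \<Longrightarrow> w (simple_root i) \<in> cox_neg_roots M n \<longleftrightarrow> neg (w (simple_root i))"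
proof -
  assume w: "w \<in> Wf" and i: "i<n"
  have V: "w (simple_root i) \<in> Vs" using WJ_V[OF _ w root_V[OF i]] by simp
  have r: "w (simple_root i) \<in> cox_roots M n" unfolding cox_roots_def W_eq using w i by blast
  show ?thesis
  proof
    assume "w (simple_root i) \<in> cox_neg_roots M n"
    hence a: "\<forall>k<n. w (simple_root i) k \<le> 0" unfolding cox_neg_roots_def by blast
    show "neg (w (simple_root i))" unfolding neg_def
    proof
      fix k show "w (simple_root i) k \<le> 0" using a V unfolding Vs_def by (cases "k<n") auto
    qed
  next
    assume "neg (w (simple_root i))"
    thus "w (simple_root i) \<in> cox_neg_roots M n" unfolding cox_neg_roots_def neg_def using r by blast
  qed
qed

definition ind :: "nat \<Rightarrow> ((nat\<Rightarrow>real)\<Rightarrow>(nat\<Rightarrow>real)) \<Rightarrow> real" where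
  "ind i w = (if neg (w (simple_root i)) then 1 else 0)"

lemma desc_sum: "w \<in> Wf \<Longrightarrow> real (descents M n w) = (\<Sum>i<n. ind i w)"
proof -
  assume w: "w \<in> Wf"
  have "{i. i < n \<and> w (simple_root i) \<in> cox_neg_roots M n} = {i\<in>{..<n}. neg (w (simple_root i))}"
    using negroot_iff[OF w] by auto
  hence "real (descents M n w) = real (card {i\<in>{..<n}. neg (w (simple_root i))})"
    unfolding descents_def by simp
  also have "\<dots> = (\<Sum>i\<in>{i\<in>{..<n}. neg (w (simple_root i))}. 1)" by simp
  also have "\<dots> = (\<Sum>i<n. ind i w)"
    unfolding ind_def by (subst sum.inter_filter) auto
  finally show ?thesis .
qed

lemma Wf_ne: "Wf \<noteq> {}" using WJ_id by auto

lemma sum_ind: "i<n \<Longrightarrow> (\<Sum>w\<in>Wf. ind i w) = real (card Wf) / 2"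
proof -
  assume i: "i<n"
  have "(\<Sum>w\<in>Wf. ind i w) = (\<Sum>w\<in>{w\<in>Wf. neg (w (simple_root i))}. 1)"
    unfolding ind_def using finW by (subst sum.inter_filter) auto
  also have "\<dots> = real (card {w\<in>Wf. neg (w (simple_root i))})" by simp
  finally have e: "(\<Sum>w\<in>Wf. ind i w) = real (card {w\<in>Wf. neg (w (simple_root i))})" .
  have "2 * real (card {w\<in>Wf. neg (w (simple_root i))}) = real (card Wf)"
    using arg_cong[OF F1[OF i], of real] by simp
  thus ?thesis using e by simp
qed

lemma sum_ind2: "i<n \<Longrightarrow> j<n \<Longrightarrow> i\<noteq>j \<Longrightarrow> (\<Sum>w\<in>Wf. ind i w * ind j w) = real (card Wf) / (2 * real (M i j))"
proof -
  assume i: "i<n" and j: "j<n" and ij: "i\<noteq>j"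
  have "(\<Sum>w\<in>Wf. ind i w * ind j w) = (\<Sum>w\<in>{w\<in>Wf. neg (w (simple_root i)) \<and> neg (w (simple_root j))}. 1)"
    unfolding ind_def using finW by (subst sum.inter_filter) (auto intro!: sum.cong)
  also have "\<dots> = real (card {w\<in>Wf. neg (w (simple_root i)) \<and> neg (w (simple_root j))})" by simp
  finally have e: "(\<Sum>w\<in>Wf. ind i w * ind j w) = real (card {w\<in>Wf. neg (w (simple_root i)) \<and> neg (w (simple_root j))})" .
  have "real (card {w\<in>Wf. neg (w (simple_root i)) \<and> neg (w (simple_root j))}) * (2 * real (M i j)) = real (card Wf)"
    using arg_cong[OF F2[OF i j ij], of real] by simp
  moreover have "real (M i j) > 0" using mge2[OF i j ij] by simp
  ultimately show ?thesis using e by (simp add: field_simps)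
qed

lemma ind_sq: "ind i w * ind i w = ind i w" unfolding ind_def by simp

theorem variance_formula:
  "des_variance M n = real n / 4 - (\<Sum>i<n. \<Sum>j\<in>{..<n}-{i}. (1/4 - 1 / (2 * real (M i j))))"
proof -
  let ?N = "real (card Wf)"
  have N: "?N > 0" using finW Wf_ne by (simp add: card_gt_0_iff)
  let ?X = "\<lambda>w. real (descents M n w)"
  have E: "measure_pmf.expectation (pmf_of_set Wf) g = sum g Wf / ?N" for g :: "_ \<Rightarrow> real"
    using integral_pmf_of_set[OF Wf_ne finW] by simp
  have S1: "sum ?X Wf = real n * ?N / 2"
  proof -
    have "sum ?X Wf = (\<Sum>w\<in>Wf. \<Sum>i<n. ind i w)" using desc_sum by simp
    also have "\<dots> = (\<Sum>i<n. \<Sum>w\<in>Wf. ind i w)" by (rule sum.swap)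
    also have "\<dots> = (\<Sum>i<n. ?N / 2)" using sum_ind by (intro sum.cong) auto
    finally show ?thesis by simp
  qed
  have S2: "(\<Sum>w\<in>Wf. (?X w)\<^sup>2) = real n * ?N / 2 + (\<Sum>i<n. \<Sum>j\<in>{..<n}-{i}. ?N / (2 * real (M i j)))"
  proof -
    have "(\<Sum>w\<in>Wf. (?X w)\<^sup>2) = (\<Sum>w\<in>Wf. \<Sum>i<n. \<Sum>j<n. ind i w * ind j w)"
      using desc_sum by (simp add: power2_eq_square sum_product)
    also have "\<dots> = (\<Sum>i<n. \<Sum>j<n. \<Sum>w\<in>Wf. ind i w * ind j w)"
      by (simp add: sum.swap[of _ Wf])
    also have "\<dots> = (\<Sum>i<n. ?N / 2 + (\<Sum>j\<in>{..<n}-{i}. ?N / (2 * real (M i j))))"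
    proof (rule sum.cong[OF refl])
      fix i assume i: "i \<in> {..<n}"
      have "(\<Sum>j<n. \<Sum>w\<in>Wf. ind i w * ind j w) = (\<Sum>w\<in>Wf. ind i w * ind i w) + (\<Sum>j\<in>{..<n}-{i}. \<Sum>w\<in>Wf. ind i w * ind j w)"
        using i by (subst sum.remove[of _ i]) auto
      also have "(\<Sum>w\<in>Wf. ind i w * ind i w) = ?N / 2" using sum_ind i by (simp add: ind_sq)
      also have "(\<Sum>j\<in>{..<n}-{i}. \<Sum>w\<in>Wf. ind i w * ind j w) = (\<Sum>j\<in>{..<n}-{i}. ?N / (2 * real (M i j)))"
        using sum_ind2 i by (intro sum.cong) auto
      finally show "(\<Sum>j<n. \<Sum>w\<in>Wf. ind i w * ind j w) = ?N / 2 + (\<Sum>j\<in>{..<n}-{i}. ?N / (2 * real (M i j)))" .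
    qed
    also have "\<dots> = real n * ?N / 2 + (\<Sum>i<n. \<Sum>j\<in>{..<n}-{i}. ?N / (2 * real (M i j)))"
      by (simp add: sum.distrib)
    finally show ?thesis .
  qed
  have V: "des_variance M n = (\<Sum>w\<in>Wf. (?X w)\<^sup>2) / ?N - (sum ?X Wf / ?N)\<^sup>2"
    unfolding des_variance_def W_eq E using var_finite[OF finW Wf_ne, of ?X] by simp
  have cnt: "(\<Sum>i<n. \<Sum>j\<in>{..<n}-{i}. (1::real)/4) = real n * (real n - 1) / 4"
  proof -
    have "\<And>i. i<n \<Longrightarrow> card ({..<n}-{i}) = n - 1" by simp
    hence "(\<Sum>i<n. \<Sum>j\<in>{..<n}-{i}. (1::real)/4) = (\<Sum>i<n. real (n-1) / 4)" by simp
    also have "\<dots> = real n * (real n - 1) / 4" by (cases n) auto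
    finally show ?thesis .
  qed
  have d: "(\<Sum>i<n. \<Sum>j\<in>{..<n}-{i}. ?N / (2 * real (M i j))) / ?N = (\<Sum>i<n. \<Sum>j\<in>{..<n}-{i}. 1 / (2 * real (M i j)))"
    using N by (simp add: sum_divide_distrib)
  have "des_variance M n = real n / 2 + (\<Sum>i<n. \<Sum>j\<in>{..<n}-{i}. 1 / (2 * real (M i j))) - (real n / 2)\<^sup>2"
    unfolding V S1 S2 using N d by (simp add: add_divide_distrib)
  also have "\<dots> = real n / 4 - (\<Sum>i<n. \<Sum>j\<in>{..<n}-{i}. (1/4 - 1 / (2 * real (M i j))))"
    using cnt by (simp add: sum_subtractf power2_eq_square algebra_simps) (simp add: field_simps)
  finally show ?thesis .
qed

end



lemma quad0:
  fixes a b :: real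
  assumes "\<And>t. 2 * t * a + t * t * b \<ge> 0"
  shows "a = 0"
proof (rule ccontr)
  assume a: "a \<noteq> 0"
  define B where "B = \<bar>b\<bar> + 1"
  have d: "B > 0" "b < B" unfolding B_def by auto
  define t where "t = - a / B"
  have "2 * t * a + t * t * b = (a*a) * (b - 2 * B) / (B * B)"
    unfolding t_def using d by (simp add: field_simps)
  moreover have "b - 2 * B < 0" using d by simp
  moreover have "a * a > 0" using a not_real_square_gt_zero by blast
  ultimately have "2 * t * a + t * t * b < 0" using d by (simp add: mult_pos_neg divide_neg_pos)
  thus False using assms[of t] by simp
qed

context coxm
begin

definition Bf :: "(nat\<Rightarrow>real) \<Rightarrow> (nat\<Rightarrow>real) \<Rightarrow> real" where
  "Bf x y = (\<Sum>k<n. x k * cf k y)"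

lemma Bf_lin1: "Bf (\<lambda>k. a * x k + b * y k) z = a * Bf x z + b * Bf y z"
  by (simp add: Bf_def distrib_right sum.distrib sum_distrib_left mult.assoc)

lemma Bf_lin2: "Bf z (\<lambda>k. a * x k + b * y k) = a * Bf z x + b * Bf z y"
  by (simp add: Bf_def cf_lin distrib_left sum.distrib sum_distrib_left algebra_simps)

lemma Bf_root: "i<n \<Longrightarrow> Bf (simple_root i) y = cf i y"
proof -
  assume i: "i<n"
  have "Bf (simple_root i) y = (\<Sum>k<n. if k = i then cf k y else 0)"
    unfolding Bf_def simple_root_def by (intro sum.cong) auto
  thus ?thesis using i by simp
qed

lemma Bf_sym: "Bf x y = Bf y x"
proof -
  have "Bf x y = (\<Sum>k<n. \<Sum>j<n. x k * y j * - cos (pi / real (M k j)))"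
    by (simp add: Bf_def cf_def cox_form_def sum_distrib_left algebra_simps)
  also have "\<dots> = (\<Sum>j<n. \<Sum>k<n. x k * y j * - cos (pi / real (M k j)))" by (rule sum.swap)
  also have "\<dots> = (\<Sum>j<n. \<Sum>k<n. y j * x k * - cos (pi / real (M j k)))"
    by (intro sum.cong refl) (simp add: M_sym mult.commute)
  also have "\<dots> = Bf y x"
    by (simp add: Bf_def cf_def cox_form_def sum_distrib_left algebra_simps)
  finally show ?thesis .
qed

lemma Bf_root2: "i<n \<Longrightarrow> Bf y (simple_root i) = cf i y"
  by (subst Bf_sym) (rule Bf_root)

lemma Bf_sr: "i<n \<Longrightarrow> Bf (sr i x) y = Bf x (sr i y)"
proof -
  assume i: "i<n"
  have sx: "sr i x = (\<lambda>k. 1 * x k + (- 2 * cf i x) * simple_root i k)" by (rule ext) (simp add: sr_apply)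
  have sy: "sr i y = (\<lambda>k. 1 * y k + (- 2 * cf i y) * simple_root i k)" by (rule ext) (simp add: sr_apply)
  show ?thesis
    apply (subst sx, subst sy)
    apply (simp only: Bf_lin1 Bf_lin2 Bf_root[OF i] Bf_root2[OF i])
    apply simp
    done
qed

end

context coxf
begin

definition IP :: "(nat\<Rightarrow>real) \<Rightarrow> (nat\<Rightarrow>real) \<Rightarrow> real" where
  "IP x y = (\<Sum>w\<in>Wf. \<Sum>k<n. w x k * w y k)"

lemma IP_sym: "IP x y = IP y x" by (simp add: IP_def mult.commute)

lemma IP_lin2: "IP z (\<lambda>k. a * x k + b * y k) = a * IP z x + b * IP z y"
proof -
  have "IP z (\<lambda>k. a * x k + b * y k) = (\<Sum>w\<in>Wf. \<Sum>k<n. w z k * (a * w x k + b * w y k))"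
    unfolding IP_def by (intro sum.cong refl) (simp add: WJ_lin)
  thus ?thesis by (simp add: IP_def sum_distrib_left distrib_left sum.distrib algebra_simps)
qed

lemma IP_lin1: "IP (\<lambda>k. a * x k + b * y k) z = a * IP x z + b * IP y z"
  by (subst IP_sym, subst IP_lin2, simp add: IP_sym)

lemma IP_sr: "i<n \<Longrightarrow> IP (sr i x) (sr i y) = IP x y"
proof -
  assume i: "i<n"
  let ?h = "\<lambda>w. w \<circ> sr i"
  have bij: "bij_betw ?h Wf Wf"
  proof (rule bij_betw_byWitness[of _ ?h])
    show "\<forall>a\<in>Wf. ?h (?h a) = a" "\<forall>a\<in>Wf. ?h (?h a) = a"
      using i by (auto simp: comp_assoc srsr[symmetric] comp_def sr_invol)
    show "?h ` Wf \<subseteq> Wf" "?h ` Wf \<subseteq> Wf" using WJ_comp srW[OF i] by auto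
  qed
  have "IP (sr i x) (sr i y) = (\<Sum>w\<in>Wf. (\<lambda>w. \<Sum>k<n. w x k * w y k) (?h w))" unfolding IP_def by simp
  also have "\<dots> = IP x y" unfolding IP_def by (rule sum.reindex_bij_betw[OF bij])
  finally show ?thesis .
qed

lemma IP_sr2: "i<n \<Longrightarrow> IP (sr i x) y = IP x (sr i y)"
  using IP_sr[of i x "sr i y"] sr_invol by simp

lemma IP_ge: "IP x x \<ge> (\<Sum>k<n. x k * x k)"
proof -
  have "(\<lambda>w. \<Sum>k<n. w x k * w x k) id \<le> (\<Sum>w\<in>Wf. \<Sum>k<n. w x k * w x k)"
    by (rule member_le_sum) (auto simp: finW WJ_id[unfolded id_def] intro!: sum_nonneg)
  thus ?thesis unfolding IP_def by simp
qed

lemma IP_nonneg: "IP x x \<ge> 0"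
proof -
  have "(\<Sum>k<n. x k * x k) \<ge> 0" by (intro sum_nonneg) auto
  thus ?thesis using IP_ge[of x] by linarith
qed

lemma IP_pos: "x \<in> Vs \<Longrightarrow> x \<noteq> (\<lambda>k. 0) \<Longrightarrow> IP x x > 0"
proof -
  assume x: "x \<in> Vs" "x \<noteq> (\<lambda>k. 0)"
  then obtain k where k: "x k \<noteq> 0" by auto
  have kn: "k<n"
  proof (rule ccontr)
    assume "\<not> k<n"
    hence "n \<le> k" by simp
    hence "x k = 0" using x(1) by (simp add: Vs_def)
    thus False using k by simp
  qed
  have "0 < x k * x k" using k not_real_square_gt_zero by blast
  also have "\<dots> \<le> (\<Sum>k<n. x k * x k)" using kn by (intro member_le_sum) auto
  also have "\<dots> \<le> IP x x" by (rule IP_ge)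
  finally show ?thesis .
qed

lemma W_sum:
  assumes "w \<in> WJ J" "finite S"
  shows "w (\<lambda>k. \<Sum>i\<in>S. c i * simple_root i k) = (\<lambda>k. \<Sum>i\<in>S. c i * w (simple_root i) k)"
  using assms(2)
proof (induction S rule: finite_induct)
  case empty thus ?case using Wf_zero[OF assms(1)] by simp
next
  case (insert a S)
  have "w (\<lambda>k. \<Sum>i\<in>insert a S. c i * simple_root i k) = w (\<lambda>k. c a * simple_root a k + 1 * (\<Sum>i\<in>S. c i * simple_root i k))"
    using insert by simp
  also have "\<dots> = (\<lambda>k. c a * w (simple_root a) k + 1 * w (\<lambda>k. \<Sum>i\<in>S. c i * simple_root i k) k)"
    using WJ_lin[OF assms(1), of "c a" "simple_root a" 1 "\<lambda>k. \<Sum>i\<in>S. c i * simple_root i k"] by simp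
  finally show ?case using insert by simp
qed

lemma V_decomp: "x \<in> Vs \<Longrightarrow> x = (\<lambda>k. \<Sum>i<n. x i * simple_root i k)"
  by (rule ext) (auto simp: Vs_def simple_root_def if_distrib not_le cong: if_cong)

lemma radical0:
  assumes x: "x \<in> Vs" and c: "\<And>i. i<n \<Longrightarrow> cf i x = 0"
  shows "x = (\<lambda>k. 0)"
proof (rule ccontr)
  assume nz: "x \<noteq> (\<lambda>k. 0)"
  have fix_: "sr i x = x" if "i<n" for i using c[OF that] by (rule_tac ext) (simp add: sr_apply)
  have ip0: "IP x (simple_root i) = 0" if i: "i<n" for i
  proof -
    have "IP x (simple_root i) = IP (sr i x) (sr i (simple_root i))" using IP_sr[OF i] by simp
    also have "\<dots> = IP x (\<lambda>k. (-1) * simple_root i k + 0 * simple_root i k)"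
      using fix_[OF i] sr_root_self[OF i] by simp
    also have "\<dots> = - IP x (simple_root i)" by (simp only: IP_lin2)
    finally show ?thesis by simp
  qed
  have wx: "w x = (\<lambda>k. \<Sum>i<n. x i * w (simple_root i) k)" if w: "w \<in> Wf" for w
  proof -
    have "w x = w (\<lambda>k. \<Sum>i<n. x i * simple_root i k)" using V_decomp[OF x] by (rule arg_cong[where f=w])
    also have "\<dots> = (\<lambda>k. \<Sum>i<n. x i * w (simple_root i) k)" by (rule W_sum[OF w]) simp
    finally show ?thesis .
  qed
  have "IP x x = (\<Sum>w\<in>Wf. \<Sum>k<n. w x k * (\<Sum>i<n. x i * w (simple_root i) k))"
    unfolding IP_def using wx by (intro sum.cong refl) simp
  also have "\<dots> = (\<Sum>w\<in>Wf. \<Sum>k<n. \<Sum>i<n. x i * (w x k * w (simple_root i) k))"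
    by (intro sum.cong refl) (simp add: sum_distrib_left mult.left_commute)
  also have "\<dots> = (\<Sum>w\<in>Wf. \<Sum>i<n. \<Sum>k<n. x i * (w x k * w (simple_root i) k))"
    by (rule sum.cong[OF refl], rule sum.swap)
  also have "\<dots> = (\<Sum>i<n. \<Sum>w\<in>Wf. \<Sum>k<n. x i * (w x k * w (simple_root i) k))"
    by (rule sum.swap)
  also have "\<dots> = (\<Sum>i<n. x i * IP x (simple_root i))"
    unfolding IP_def by (simp add: sum_distrib_left)
  also have "\<dots> = 0" using ip0 by simp
  finally show False using IP_pos[OF x nz] by simp
qed

end



context coxf
begin

lemma sr_cont: "continuous_on UNIV (sr i)"
proof (rule continuous_on_coordinatewise_then_product)
  fix k
  show "continuous_on UNIV (\<lambda>x. sr i x k)"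
  proof -
    have c1: "continuous_on UNIV (\<lambda>x::nat\<Rightarrow>real. \<Sum>j<n. - cos (pi / real (M i j)) * x j)"
      by (intro continuous_on_sum continuous_on_mult continuous_on_const continuous_on_product_coordinates)
    show ?thesis unfolding sr_apply cf_def cox_form_def
      by (intro continuous_on_diff continuous_on_mult continuous_on_const c1 continuous_on_product_coordinates)
  qed
qed

lemma ev_cont: "continuous_on UNIV (ev xs)"
proof (induction xs)
  case Nil thus ?case by (simp add: continuous_on_id)
next
  case (Cons a xs)
  show ?case unfolding ev_Cons
    by (rule continuous_on_compose[OF Cons]) (rule continuous_on_subset[OF sr_cont], simp)
qed

lemma W_cont: "w \<in> Wf \<Longrightarrow> continuous_on UNIV (\<lambda>x. w x k)"
proof -
  assume "w \<in> Wf"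
  then obtain xs where "w = ev xs" unfolding WJ_def by blast
  thus ?thesis using continuous_on_product_then_coordinatewise[OF ev_cont[of xs], of k] by simp
qed

lemma IP_cont: "continuous_on UNIV (\<lambda>x. IP x x)"
  unfolding IP_def by (intro continuous_on_sum continuous_on_mult W_cont) auto

lemma Bf_cont: "continuous_on UNIV (\<lambda>x. Bf x x)"
  unfolding Bf_def cf_def cox_form_def
  by (intro continuous_on_sum continuous_on_mult continuous_on_const continuous_on_product_coordinates)

definition Bx :: "(nat \<Rightarrow> real) set" where "Bx = Pi\<^sub>E UNIV (\<lambda>k. if k<n then {-1..1} else {0})"

lemma Bx_compact: "compact Bx"
proof -
  have "compactin (product_topology (\<lambda>i. euclidean) UNIV) Bx"
    unfolding Bx_def by (subst compactin_PiE) auto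
  thus ?thesis by (simp add: euclidean_product_topology)
qed

definition KK :: "(nat \<Rightarrow> real) set" where "KK = {x. x \<in> Vs \<and> IP x x = 1}"

lemma Vs_closed: "closed Vs"
proof -
  have "Vs = (\<Inter>k\<in>{n..}. {x. x k = 0})" unfolding Vs_def by auto
  moreover have "closed (\<Inter>k\<in>{n..}. {x::nat\<Rightarrow>real. x k = 0})"
    by (intro closed_INT ballI closed_Collect_eq continuous_on_product_coordinates continuous_on_const)
  ultimately show ?thesis by simp
qed

lemma KK_compact: "compact KK"
proof -
  have c1: "closed {x. IP x x = 1}" by (intro closed_Collect_eq IP_cont continuous_on_const)
  have sub: "KK \<subseteq> Bx"
  proof
    fix x assume x: "x \<in> KK"
    have "x k \<in> (if k<n then {-1..1} else {0})" for k
    proof (cases "k<n")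
      case True
      have "x k * x k \<le> (\<Sum>k<n. x k * x k)" using True by (intro member_le_sum) auto
      also have "\<dots> \<le> 1" using IP_ge[of x] x unfolding KK_def by simp
      finally have "x k * x k \<le> 1" .
      hence "(x k)\<^sup>2 \<le> 1" by (simp add: power2_eq_square)
      hence "\<bar>x k\<bar> \<le> 1" using abs_square_le_1 by blast
      thus ?thesis using True by auto
    next
      case False thus ?thesis using x unfolding KK_def Vs_def by auto
    qed
    thus "x \<in> Bx" unfolding Bx_def by auto
  qed
  have "KK = Bx \<inter> (Vs \<inter> {x. IP x x = 1})" using sub unfolding KK_def by auto
  thus ?thesis using Bx_compact Vs_closed c1 by (simp add: closed_Int compact_Int_closed)
qed

lemma IP_hom: "IP (\<lambda>k. c * x k) (\<lambda>k. c * x k) = c * c * IP x x"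
  using IP_lin1[of c x 0 x "\<lambda>k. c * x k"] IP_lin2[of x c x 0 x] by simp

lemma Bf_hom: "Bf (\<lambda>k. c * x k) (\<lambda>k. c * x k) = c * c * Bf x x"
  using Bf_lin1[of c x 0 x "\<lambda>k. c * x k"] Bf_lin2[of x c x 0 x] by simp

lemma IP_exp: "IP (\<lambda>k. x k + t * y k) (\<lambda>k. x k + t * y k) = IP x x + 2 * t * IP x y + t * t * IP y y"
  using IP_lin1[of 1 x t y "\<lambda>k. x k + t * y k"] IP_lin2[of x 1 x t y] IP_lin2[of y 1 x t y] IP_sym[of y x]
  by (simp add: algebra_simps)

lemma Bf_exp: "Bf (\<lambda>k. x k + t * y k) (\<lambda>k. x k + t * y k) = Bf x x + 2 * t * Bf x y + t * t * Bf y y"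
  using Bf_lin1[of 1 x t y "\<lambda>k. x k + t * y k"] Bf_lin2[of x 1 x t y] Bf_lin2[of y 1 x t y] Bf_sym[of y x]
  by (simp add: algebra_simps)

lemma Vs_lin: "x \<in> Vs \<Longrightarrow> y \<in> Vs \<Longrightarrow> (\<lambda>k. a * x k + b * y k) \<in> Vs" unfolding Vs_def by auto

theorem Bf_pd: "x \<in> Vs \<Longrightarrow> x \<noteq> (\<lambda>k. 0) \<Longrightarrow> Bf x x > 0"
proof -
  assume x: "x \<in> Vs" "x \<noteq> (\<lambda>k. 0)"
  have n: "0 < n"
  proof (rule ccontr)
    assume "\<not> 0 < n"
    hence "\<forall>k. x k = 0" using x(1) unfolding Vs_def by auto
    thus False using x(2) by auto
  qed
  have r0: "simple_root 0 \<in> Vs" using root_V n by simp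
  have ip0: "IP (simple_root 0) (simple_root 0) > 0" using IP_pos[OF r0 root_ne0] .
  define c0 where "c0 = 1 / sqrt (IP (simple_root 0) (simple_root 0))"
  have "(\<lambda>k. c0 * simple_root 0 k) \<in> KK"
    unfolding KK_def using IP_hom[of c0] ip0 r0 Vs_lin[OF r0 r0, of c0 0]
    by (simp add: c0_def)
  hence KKne: "KK \<noteq> {}" by auto
  obtain x0 where x0: "x0 \<in> KK" and x0min: "\<And>y. y \<in> KK \<Longrightarrow> Bf x0 x0 \<le> Bf y y"
    using continuous_attains_inf[OF KK_compact KKne continuous_on_subset[OF Bf_cont]] by blast
  define lam where "lam = Bf x0 x0"
  have x0V: "x0 \<in> Vs" and x01: "IP x0 x0 = 1" using x0 unfolding KK_def by auto
  have glob: "Bf z z \<ge> lam * IP z z" if z: "z \<in> Vs" for z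
  proof (cases "z = (\<lambda>k. 0)")
    case True thus ?thesis by (simp add: Bf_def IP_def cf_def cox_form_def Wf_zero)
  next
    case False
    have p: "IP z z > 0" using IP_pos[OF z False] .
    define c where "c = 1 / sqrt (IP z z)"
    have cc: "c * c * IP z z = 1" using p by (simp add: c_def)
    have "(\<lambda>k. c * z k) \<in> KK" unfolding KK_def using IP_hom[of c z] cc Vs_lin[OF z z, of c 0] by simp
    hence "lam \<le> c * c * Bf z z" using x0min Bf_hom unfolding lam_def by metis
    hence "lam * IP z z \<le> c * c * IP z z * Bf z z" using p by (simp add: algebra_simps mult_right_mono)
    thus ?thesis using cc by simp
  qed
  have lag: "Bf x0 y = lam * IP x0 y" if y: "y \<in> Vs" for y
  proof -
    have "2 * t * (Bf x0 y - lam * IP x0 y) + t * t * (Bf y y - lam * IP y y) \<ge> 0" for t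
    proof -
      have "(\<lambda>k. x0 k + t * y k) \<in> Vs" using Vs_lin[OF x0V y, of 1 t] by simp
      hence "Bf (\<lambda>k. x0 k + t * y k) (\<lambda>k. x0 k + t * y k) \<ge> lam * IP (\<lambda>k. x0 k + t * y k) (\<lambda>k. x0 k + t * y k)"
        by (rule glob)
      thus ?thesis unfolding Bf_exp IP_exp using x01 lam_def by (simp add: algebra_simps)
    qed
    hence "Bf x0 y - lam * IP x0 y = 0" by (rule quad0)
    thus ?thesis by simp
  qed
  have lpos: "lam > 0"
  proof (rule ccontr)
    assume "\<not> lam > 0"
    hence l0: "lam \<le> 0" by simp
    have cfz: "cf i x0 = 0" if i: "i<n" for i
    proof (rule ccontr)
      assume nz: "cf i x0 \<noteq> 0"
      have sx: "sr i x0 = (\<lambda>k. 1 * x0 k + (- 2 * cf i x0) * simple_root i k)" by (rule ext) (simp add: sr_apply)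
      have "Bf (simple_root i) y = lam * IP (simple_root i) y" if y: "y \<in> Vs" for y
      proof -
        have syV: "sr i y \<in> Vs" using sr_V[OF i y] .
        have "Bf (sr i x0) y = lam * IP (sr i x0) y"
          using Bf_sr[OF i] lag[OF syV] IP_sr2[OF i] by simp
        hence "Bf x0 y + (- 2 * cf i x0) * Bf (simple_root i) y = lam * (IP x0 y + (- 2 * cf i x0) * IP (simple_root i) y)"
          unfolding sx Bf_lin1 IP_lin1 by simp
        hence "(- 2 * cf i x0) * Bf (simple_root i) y = (- 2 * cf i x0) * (lam * IP (simple_root i) y)"
          using lag[OF y] by (simp add: algebra_simps) metis
        thus ?thesis using nz by simp
      qed
      hence "Bf (simple_root i) (simple_root i) = lam * IP (simple_root i) (simple_root i)" using root_V[OF i] by blast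
      moreover have "Bf (simple_root i) (simple_root i) = 1" using Bf_root[OF i] cf_self[OF i] by simp
      moreover have "lam * IP (simple_root i) (simple_root i) \<le> 0" using l0 IP_nonneg by (simp add: mult_nonpos_nonneg)
      ultimately show False by simp
    qed
    have "x0 = (\<lambda>k. 0)" using radical0[OF x0V cfz] by blast
    hence "IP x0 x0 = 0" by (simp add: IP_def Wf_zero)
    thus False using x01 by simp
  qed
  have "Bf x x \<ge> lam * IP x x" using glob[OF x(1)] .
  moreover have "lam * IP x x > 0" using lpos IP_pos[OF x] by simp
  ultimately show ?thesis by simp
qed

end



lemma cos_pim_ge: "3 \<le> m \<Longrightarrow> cos (pi / real m) \<ge> 1/2"
proof -
  assume m: "3 \<le> m"
  have "pi / real m \<le> pi / 3" using m by (intro divide_left_mono) auto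
  hence "cos (pi / 3) \<le> cos (pi / real m)" using m by (intro cos_monotone_0_pi_le) auto
  thus ?thesis by (simp add: cos_60)
qed

lemma cos_pim_ge6: "6 \<le> m \<Longrightarrow> cos (pi / real m) \<ge> sqrt 3 / 2"
proof -
  assume m: "6 \<le> m"
  have "pi / real m \<le> pi / 6" using m by (intro divide_left_mono) auto
  hence "cos (pi / 6) \<le> cos (pi / real m)" using m by (intro cos_monotone_0_pi_le) auto
  thus ?thesis by (simp add: cos_30)
qed

lemma cos_pim_ge4: "4 \<le> m \<Longrightarrow> cos (pi / real m) \<ge> sqrt 2 / 2"
proof -
  assume m: "4 \<le> m"
  have "pi / real m \<le> pi / 4" using m by (intro divide_left_mono) auto
  hence "cos (pi / 4) \<le> cos (pi / real m)" using m by (intro cos_monotone_0_pi_le) auto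
  thus ?thesis by (simp add: cos_45)
qed

lemma cos_pim_ge0: "2 \<le> m \<Longrightarrow> cos (pi / real m) \<ge> 0"
proof -
  assume m: "2 \<le> m"
  have "pi / real m \<le> pi / 2" using m by (intro divide_left_mono) auto
  moreover have "- (pi/2) \<le> pi / real m" using m by (smt (verit) divide_nonneg_nonneg of_nat_0_le_iff pi_gt_zero)
  ultimately show ?thesis by (intro cos_ge_zero) auto
qed

context coxf
begin

definition cc :: "nat \<Rightarrow> nat \<Rightarrow> real" where "cc i j = 1/4 - 1 / (2 * real (M i j))"

lemma cc_nonneg: "i<n \<Longrightarrow> j<n \<Longrightarrow> i\<noteq>j \<Longrightarrow> cc i j \<ge> 0"
proof -
  assume "i<n" "j<n" "i\<noteq>j"
  hence m: "2 \<le> M i j" using mge2 by auto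
  hence "1 / (2 * real (M i j)) \<le> 1/4" by (simp add: field_simps)
  thus ?thesis unfolding cc_def by simp
qed

lemma cc_zero: "i<n \<Longrightarrow> j<n \<Longrightarrow> i\<noteq>j \<Longrightarrow> \<not> 3 \<le> M i j \<Longrightarrow> cc i j = 0"
proof -
  assume "i<n" "j<n" "i\<noteq>j" "\<not> 3 \<le> M i j"
  hence "M i j = 2" using mge2 by fastforce
  thus ?thesis unfolding cc_def by simp
qed

abbreviation "cpt i \<equiv> cox_component M n i"
abbreviation "EE \<equiv> cox_edges M n"

lemma EE_sym: "sym EE"
proof (rule symI)
  fix a b assume "(a,b) \<in> EE"
  thus "(b,a) \<in> EE" unfolding cox_edges_def using M_sym[of a b] by auto
qed

lemma cpt_self: "i<n \<Longrightarrow> i \<in> cpt i" unfolding cox_component_def by auto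

lemma cpt_sub: "cpt i \<subseteq> {..<n}" unfolding cox_component_def by auto

lemma cpt_fin: "finite (cpt i)" using cpt_sub finite_subset by blast

lemma cpt_eq: "j \<in> cpt i \<Longrightarrow> cpt j = cpt i"
proof -
  assume "j \<in> cpt i"
  hence ij: "(i,j) \<in> EE\<^sup>*" unfolding cox_component_def by auto
  hence ji: "(j,i) \<in> EE\<^sup>*" using sym_rtrancl[OF EE_sym] unfolding sym_def by blast
  show ?thesis
  proof (rule set_eqI)
    fix x
    have "(j,x) \<in> EE\<^sup>* \<longleftrightarrow> (i,x) \<in> EE\<^sup>*"
    proof
      assume "(j,x) \<in> EE\<^sup>*" thus "(i,x) \<in> EE\<^sup>*" by (rule rtrancl_trans[OF ij])
    next
      assume "(i,x) \<in> EE\<^sup>*" thus "(j,x) \<in> EE\<^sup>*" by (rule rtrancl_trans[OF ji])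
    qed
    thus "x \<in> cpt j \<longleftrightarrow> x \<in> cpt i" unfolding cox_component_def by simp
  qed
qed

lemma edge_cpt: "i<n \<Longrightarrow> j<n \<Longrightarrow> i\<noteq>j \<Longrightarrow> 3 \<le> M i j \<Longrightarrow> j \<in> cpt i"
  unfolding cox_component_def cox_edges_def by auto

definition SS where "SS = {i. i<n \<and> card (cpt i) \<noteq> 2}"
definition DD where "DD = {i. i<n \<and> card (cpt i) = 2}"
definition gg where "gg i = 1/4 - (\<Sum>j\<in>{..<n}-{i}. cc i j)"

lemma var_gg: "des_variance M n = (\<Sum>i<n. gg i)"
proof -
  have "des_variance M n = (\<Sum>i<n. (1::real)/4) - (\<Sum>i<n. \<Sum>j\<in>{..<n}-{i}. cc i j)"
    using variance_formula unfolding cc_def by simp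
  also have "\<dots> = (\<Sum>i<n. gg i)" unfolding gg_def by (simp add: sum_subtractf)
  finally show ?thesis .
qed

lemma gS: "i \<in> SS \<Longrightarrow> (\<Sum>j\<in>{..<n}-{i}. cc i j) = (\<Sum>j\<in>SS-{i}. cc i j)"
proof -
  assume i: "i \<in> SS"
  show ?thesis
  proof (rule sum.mono_neutral_right)
    show "finite ({..<n}-{i})" by simp
    show "SS - {i} \<subseteq> {..<n} - {i}" unfolding SS_def by auto
    show "\<forall>j\<in>{..<n} - {i} - (SS - {i}). cc i j = 0"
    proof
      fix j assume j: "j \<in> {..<n} - {i} - (SS - {i})"
      hence jn: "j<n" "j\<noteq>i" "card (cpt j) = 2" unfolding SS_def by auto
      have "\<not> 3 \<le> M i j"
      proof
        assume "3 \<le> M i j"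
        hence "j \<in> cpt i" using edge_cpt jn i unfolding SS_def by auto
        hence "cpt j = cpt i" by (rule cpt_eq)
        thus False using jn i unfolding SS_def by auto
      qed
      thus "cc i j = 0" using cc_zero jn i unfolding SS_def by auto
    qed
  qed
qed

lemma gD: "i \<in> DD \<Longrightarrow> \<exists>p. p \<noteq> i \<and> p < n \<and> cpt i = {i,p} \<and> gg i = 1 / (2 * real (M i p))"
proof -
  assume i: "i \<in> DD"
  hence inn: "i<n" and c2: "card (cpt i) = 2" unfolding DD_def by auto
  obtain x y where xy: "cpt i = {x,y}" "x\<noteq>y" using c2 unfolding card_2_iff by blast
  have "i \<in> cpt i" using cpt_self inn by simp
  then obtain p where p: "cpt i = {i,p}" "p \<noteq> i" using xy by auto
  have pn: "p<n" using p cpt_sub by auto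
  have "(\<Sum>j\<in>{..<n}-{i}. cc i j) = (\<Sum>j\<in>{p}. cc i j)"
  proof (rule sum.mono_neutral_right)
    show "finite ({..<n}-{i})" by simp
    show "{p} \<subseteq> {..<n} - {i}" using pn p by auto
    show "\<forall>j\<in>{..<n} - {i} - {p}. cc i j = 0"
    proof
      fix j assume j: "j \<in> {..<n} - {i} - {p}"
      have "\<not> 3 \<le> M i j" using edge_cpt[of i j] j p inn by auto
      thus "cc i j = 0" using cc_zero j inn by auto
    qed
  qed
  hence "gg i = 1 / (2 * real (M i p))" unfolding gg_def cc_def by simp
  thus ?thesis using p pn by blast
qed

lemma SD: "{..<n} = SS \<union> DD" "SS \<inter> DD = {}" unfolding SS_def DD_def by auto

lemma D_sum: "(\<Sum>i\<in>DD. gg i) = dihedral_sum M n"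
proof -
  let ?dp = "dihedral_pairs M n"
  have dp_fin: "finite ?dp"
    by (rule finite_subset[of _ "{..<n} \<times> {..<n}"]) (auto simp: dihedral_pairs_def)
  have dpc: "cpt a = {a,b} \<and> cpt b = {a,b} \<and> a < b \<and> b < n" if ab: "(a,b) \<in> ?dp" for a b
  proof -
    have ca: "cpt a = {a,b}" "a<b" "b<n" using ab unfolding dihedral_pairs_def by auto
    hence "b \<in> cpt a" by auto
    thus ?thesis using cpt_eq ca by auto
  qed
  have ggab: "gg a = 1 / (2 * real (M a b)) \<and> gg b = 1 / (2 * real (M a b))" if ab: "(a,b) \<in> ?dp" for a b
  proof -
    have c: "cpt a = {a,b}" "cpt b = {a,b}" "a<b" "b<n" using dpc[OF ab] by auto
    have aD: "a \<in> DD" unfolding DD_def using c by auto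
    have bD: "b \<in> DD" unfolding DD_def using c by auto
    obtain p where p: "p \<noteq> a" "cpt a = {a,p}" "gg a = 1 / (2 * real (M a p))" using gD[OF aD] by blast
    obtain q where q: "q \<noteq> b" "cpt b = {b,q}" "gg b = 1 / (2 * real (M b q))" using gD[OF bD] by blast
    have "p \<in> {a,b}" using p c by auto
    hence "p = b" using p(1) by auto
    moreover have "q \<in> {a,b}" using q c by auto
    hence "q = a" using q(1) by auto
    moreover have "M b a = M a b" using M_sym c by auto
    ultimately show ?thesis using p q by simp
  qed
  have Dun: "DD = fst ` ?dp \<union> snd ` ?dp"
  proof
    show "DD \<subseteq> fst ` ?dp \<union> snd ` ?dp"
    proof
      fix i assume i: "i \<in> DD"
      obtain p where p: "p \<noteq> i" "p<n" "cpt i = {i,p}" using gD[OF i] by blast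
      have inn: "i<n" using i DD_def by auto
      show "i \<in> fst ` ?dp \<union> snd ` ?dp"
      proof (cases "i < p")
        case True
        hence "(i,p) \<in> ?dp" unfolding dihedral_pairs_def using p by auto
        thus ?thesis by force
      next
        case False
        hence pi: "p < i" using p by auto
        have "p \<in> cpt i" using p by auto
        hence "cpt p = {p,i}" using cpt_eq p by auto
        hence "(p,i) \<in> ?dp" unfolding dihedral_pairs_def using pi inn by auto
        thus ?thesis by force
      qed
    qed
    show "fst ` ?dp \<union> snd ` ?dp \<subseteq> DD"
    proof
      fix i assume "i \<in> fst ` ?dp \<union> snd ` ?dp"
      then obtain a b where ab: "(a,b) \<in> ?dp" "i = a \<or> i = b" by auto
      have c: "cpt a = {a,b}" "cpt b = {a,b}" "a<b" "b<n" using dpc[OF ab(1)] by auto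
      thus "i \<in> DD" using ab(2) unfolding DD_def by auto
    qed
  qed
  have disj: "fst ` ?dp \<inter> snd ` ?dp = {}"
  proof (rule ccontr)
    assume "\<not> ?thesis"
    then obtain i a b where iab: "(i,b) \<in> ?dp" "(a,i) \<in> ?dp" by force
    have c1: "cpt i = {i,b}" "i<b" using dpc[OF iab(1)] by auto
    have c2: "cpt i = {a,i}" "a<i" using dpc[OF iab(2)] by auto
    have "b \<in> {a,i}" using c1 c2 by auto
    thus False using c1 c2 by auto
  qed
  have inj1: "inj_on fst ?dp"
  proof (rule inj_onI)
    fix x y assume x: "x \<in> ?dp" and y: "y \<in> ?dp" and e: "fst x = fst y"
    obtain a b where [simp]: "x = (a,b)" by fastforce
    obtain a' b' where [simp]: "y = (a',b')" by fastforce
    have h: "cpt a = {a,b}" "a<b" "cpt a' = {a',b'}" "a'<b'" using dpc x y by auto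
    have aa: "a' = a" using e by simp
    have "b' \<in> {a,b}" using h aa by auto
    thus "x = y" using h aa by auto
  qed
  have inj2: "inj_on snd ?dp"
  proof (rule inj_onI)
    fix x y assume x: "x \<in> ?dp" and y: "y \<in> ?dp" and e: "snd x = snd y"
    obtain a b where [simp]: "x = (a,b)" by fastforce
    obtain a' b' where [simp]: "y = (a',b')" by fastforce
    have h: "cpt b = {a,b}" "a<b" "cpt b' = {a',b'}" "a'<b'" using dpc x y by auto
    have bb: "b' = b" using e by simp
    have "a' \<in> {a,b}" using h bb by auto
    thus "x = y" using h bb by auto
  qed
  have "(\<Sum>i\<in>DD. gg i) = (\<Sum>i\<in>fst ` ?dp. gg i) + (\<Sum>i\<in>snd ` ?dp. gg i)"
    unfolding Dun using disj dp_fin by (intro sum.union_disjoint) auto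
  also have "\<dots> = (\<Sum>x\<in>?dp. gg (fst x)) + (\<Sum>x\<in>?dp. gg (snd x))"
    using sum.reindex[OF inj1, of gg] sum.reindex[OF inj2, of gg] by simp
  also have "\<dots> = (\<Sum>x\<in>?dp. gg (fst x) + gg (snd x))" by (simp add: sum.distrib)
  also have "\<dots> = (\<Sum>x\<in>?dp. (case x of (i,j) \<Rightarrow> 1 / real (M i j)))"
    by (rule sum.cong[OF refl]) (use ggab in auto)
  also have "\<dots> = dihedral_sum M n" unfolding dihedral_sum_def by simp
  finally show ?thesis .
qed

definition TT where "TT = (\<Sum>i\<in>SS. \<Sum>j\<in>SS-{i}. cc i j)"

lemma var_split: "des_variance M n = real (card SS) / 4 - TT + dihedral_sum M n"
proof -
  have "des_variance M n = (\<Sum>i\<in>SS. gg i) + (\<Sum>i\<in>DD. gg i)"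
    unfolding var_gg SD(1) by (rule sum.union_disjoint) (use SD(2) in \<open>auto simp: SS_def DD_def\<close>)
  also have "(\<Sum>i\<in>SS. gg i) = (\<Sum>i\<in>SS. 1/4 - (\<Sum>j\<in>SS-{i}. cc i j))"
    unfolding gg_def using gS by simp
  also have "\<dots> = real (card SS) / 4 - TT" unfolding TT_def by (simp add: sum_subtractf)
  finally show ?thesis using D_sum by simp
qed

lemma TT_nonneg: "TT \<ge> 0"
  unfolding TT_def SS_def by (intro sum_nonneg cc_nonneg) auto

lemma nondih_eq: "nondihedral_rank M n = card SS"
  unfolding nondihedral_rank_def SS_def by simp

lemma dsum_nonneg: "dihedral_sum M n \<ge> 0"
  unfolding dihedral_sum_def by (intro sum_nonneg) auto

end



context coxf
begin

lemma cfroot_self: "q<n \<Longrightarrow> cf q (simple_root q) = 1" using cf_self by simp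

lemma bf3:
  assumes ijk: "i<n" "j<n" "k<n" "i\<noteq>j" "i\<noteq>k" "j\<noteq>k"
  shows "Bf (\<lambda>t. a * simple_root i t + (b * simple_root j t + c * simple_root k t))
            (\<lambda>t. a * simple_root i t + (b * simple_root j t + c * simple_root k t))
       = a*a + b*b + c*c - 2*a*b*cos (pi / real (M i j)) - 2*a*c*cos (pi / real (M i k))
          - 2*b*c*cos (pi / real (M j k))"
proof -
  define y where "y = (\<lambda>t. b * simple_root j t + c * simple_root k t)"
  define x where "x = (\<lambda>t. a * simple_root i t + (b * simple_root j t + c * simple_root k t))"
  have xe: "x = (\<lambda>t. a * simple_root i t + 1 * y t)" unfolding x_def y_def by simp
  have Bx: "Bf x z = a * cf i z + b * cf j z + c * cf k z" for z
  proof -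
    have "Bf x z = a * Bf (simple_root i) z + 1 * Bf y z" unfolding xe by (rule Bf_lin1)
    also have "Bf y z = b * Bf (simple_root j) z + c * Bf (simple_root k) z" unfolding y_def by (rule Bf_lin1)
    finally show ?thesis using Bf_root ijk by simp
  qed
  have cx: "cf q x = a * cf q (simple_root i) + b * cf q (simple_root j) + c * cf q (simple_root k)" for q
  proof -
    have "cf q x = a * cf q (simple_root i) + 1 * cf q y" unfolding xe by (rule cf_lin)
    also have "cf q y = b * cf q (simple_root j) + c * cf q (simple_root k)" unfolding y_def by (rule cf_lin)
    finally show ?thesis by simp
  qed
  have s: "M j i = M i j" "M k i = M i k" "M k j = M j k" using M_sym ijk by auto
  show ?thesis
    unfolding x_def[symmetric] Bx cx
    using ijk by (simp add: cf_root cfroot_self s M_diag algebra_simps)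
qed

lemma m5core:
  assumes ijk: "i<n" "j<n" "k<n" "i\<noteq>j" "i\<noteq>k" "j\<noteq>k" and m: "6 \<le> M i j" "3 \<le> M i k"
  shows False
proof -
  define x where "x = (\<lambda>t. 2 * simple_root i t + (sqrt 3 * simple_root j t + 1 * simple_root k t))"
  have xV: "x \<in> Vs" unfolding x_def Vs_def simple_root_def using ijk by auto
  have "x i = 2" unfolding x_def simple_root_def using ijk by auto
  hence "x \<noteq> (\<lambda>k. 0)" by auto
  hence pos: "Bf x x > 0" using Bf_pd xV by blast
  have c1: "cos (pi / real (M i j)) \<ge> sqrt 3 / 2" using cos_pim_ge6 m by simp
  have c2: "cos (pi / real (M i k)) \<ge> 1/2" using cos_pim_ge m by simp
  have c3: "cos (pi / real (M j k)) \<ge> 0" using cos_pim_ge0 mge2 ijk by simp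
  have s3: "sqrt 3 * sqrt 3 = (3::real)" by simp
  have s0: "sqrt 3 \<ge> (0::real)" by simp
  have "Bf x x = 8 - 4 * sqrt 3 * cos (pi / real (M i j)) - 4 * cos (pi / real (M i k))
                 - 2 * sqrt 3 * cos (pi / real (M j k))"
    unfolding x_def bf3[OF ijk] using s3 by (simp add: algebra_simps)
  moreover have "4 * sqrt 3 * cos (pi / real (M i j)) \<ge> 6"
  proof -
    have "4 * sqrt 3 * cos (pi / real (M i j)) \<ge> 4 * sqrt 3 * (sqrt 3 / 2)"
      using c1 s0 by (intro mult_left_mono) auto
    thus ?thesis using s3 by simp
  qed
  moreover have "2 * sqrt 3 * cos (pi / real (M j k)) \<ge> 0" using c3 s0 by simp
  ultimately have "Bf x x \<le> 0" using c2 by linarith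
  thus False using pos by simp
qed

lemma path_exit:
  assumes "(i,k) \<in> EE\<^sup>*" "k \<notin> {i,j}"
  shows "\<exists>a b. a \<in> {i,j} \<and> b \<notin> {i,j} \<and> (a,b) \<in> EE"
  using assms
proof (induction rule: rtrancl_induct)
  case base thus ?case by simp
next
  case (step y z)
  show ?case
  proof (cases "y \<in> {i,j}")
    case True thus ?thesis using step by blast
  next
    case False thus ?thesis using step by blast
  qed
qed

lemma m5:
  assumes i: "i \<in> SS" and j: "j \<in> SS" and ij: "i \<noteq> j" and m3: "3 \<le> M i j"
  shows "M i j \<le> 5"
proof (rule ccontr)
  assume "\<not> M i j \<le> 5"
  hence m6: "6 \<le> M i j" by simp
  have inn: "i<n" "j<n" using i j unfolding SS_def by auto
  have jc: "j \<in> cpt i" using edge_cpt inn ij m3 by auto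
  have ic: "i \<in> cpt i" using cpt_self inn by auto
  have "\<exists>k. k \<in> cpt i \<and> k \<notin> {i,j}"
  proof (rule ccontr)
    assume "\<not> ?thesis"
    hence "cpt i = {i,j}" using jc ic by auto
    thus False using i ij unfolding SS_def by auto
  qed
  then obtain k where k: "k \<in> cpt i" "k \<notin> {i,j}" by blast
  have "(i,k) \<in> EE\<^sup>*" using k unfolding cox_component_def by auto
  then obtain a b where ab: "a \<in> {i,j}" "b \<notin> {i,j}" "(a,b) \<in> EE" using path_exit k by blast
  have bb: "b<n" "a \<noteq> b" "3 \<le> M a b" using ab unfolding cox_edges_def by auto
  show False
  proof (cases "a = i")
    case True
    thus False using m5core[of i j b] inn bb ab ij m6 by auto
  next
    case False
    hence "a = j" using ab by auto
    moreover have "M j i = M i j" using M_sym inn by auto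
    ultimately show False using m5core[of j i b] inn bb ab ij m6 by auto
  qed
qed

lemma cc_cos: "i \<in> SS \<Longrightarrow> j \<in> SS \<Longrightarrow> i \<noteq> j \<Longrightarrow> cc i j \<le> 6/25 * cos (pi / real (M i j))"
proof -
  assume i: "i \<in> SS" and j: "j \<in> SS" and ij: "i \<noteq> j"
  have inn: "i<n" "j<n" using i j unfolding SS_def by auto
  have m2: "2 \<le> M i j" using mge2 inn ij by auto
  consider "M i j = 2" | "M i j = 3" | "4 \<le> M i j \<and> M i j \<le> 5"
    using m2 m5[OF i j ij] by linarith
  thus ?thesis
  proof cases
    case 1 thus ?thesis unfolding cc_def by simp
  next
    case 2 thus ?thesis unfolding cc_def by (simp add: cos_60)
  next
    case 3
    hence c: "cos (pi / real (M i j)) \<ge> sqrt 2 / 2" using cos_pim_ge4 by blast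
    have s2: "sqrt 2 \<ge> (5/4::real)"
      by (rule real_le_rsqrt) (simp add: power2_eq_square)
    have "cc i j \<le> 3/20"
    proof -
      have "real (M i j) \<le> 5" using 3 by simp
      hence "1 / (2 * real (M i j)) \<ge> 1/10" using 3 by (simp add: field_simps)
      thus ?thesis unfolding cc_def by simp
    qed
    also have "(3/20::real) \<le> 6/25 * (sqrt 2 / 2)" using s2 by simp
    also have "\<dots> \<le> 6/25 * cos (pi / real (M i j))" using c by simp
    finally show ?thesis .
  qed
qed

lemma cos_sum_bound: "(\<Sum>i\<in>SS. \<Sum>j\<in>SS-{i}. cos (pi / real (M i j))) \<le> real (card SS)"
proof -
  define x where "x = (\<lambda>k. if k \<in> SS then 1 else (0::real))"
  have xV: "x \<in> Vs" unfolding x_def Vs_def SS_def by auto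
  have Bnn: "Bf x x \<ge> 0"
  proof (cases "x = (\<lambda>k. 0)")
    case True thus ?thesis by (simp add: Bf_def)
  next
    case False thus ?thesis using Bf_pd[OF xV False] by simp
  qed
  have SSsub: "SS \<subseteq> {..<n}" unfolding SS_def by auto
  have cfx: "cf k x = 1 - (\<Sum>j\<in>SS-{k}. cos (pi / real (M k j)))" if k: "k \<in> SS" for k
  proof -
    have kn: "k<n" using k SSsub by auto
    have "cf k x = (\<Sum>j\<in>SS. - cos (pi / real (M k j)))"
      unfolding cf_def cox_form_def x_def
      by (rule sum.mono_neutral_cong_right) (use SSsub in auto)
    also have "\<dots> = - cos (pi / real (M k k)) + (\<Sum>j\<in>SS-{k}. - cos (pi / real (M k j)))"
      using k SSsub by (subst sum.remove[of _ k]) (auto intro: finite_subset)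
    finally show ?thesis using M_diag[OF kn] by (simp add: sum_negf)
  qed
  have "Bf x x = (\<Sum>k\<in>SS. cf k x)"
    unfolding Bf_def x_def by (rule sum.mono_neutral_cong_right) (use SSsub in auto)
  also have "\<dots> = (\<Sum>k\<in>SS. 1 - (\<Sum>j\<in>SS-{k}. cos (pi / real (M k j))))" using cfx by simp
  also have "\<dots> = real (card SS) - (\<Sum>i\<in>SS. \<Sum>j\<in>SS-{i}. cos (pi / real (M i j)))"
    by (simp add: sum_subtractf)
  finally show ?thesis using Bnn by simp
qed

lemma TT_bound: "TT \<le> 6/25 * real (card SS)"
proof -
  have "TT \<le> (\<Sum>i\<in>SS. \<Sum>j\<in>SS-{i}. 6/25 * cos (pi / real (M i j)))"
    unfolding TT_def by (intro sum_mono cc_cos) auto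
  also have "\<dots> = 6/25 * (\<Sum>i\<in>SS. \<Sum>j\<in>SS-{i}. cos (pi / real (M i j)))"
    by (simp add: sum_distrib_left)
  also have "\<dots> \<le> 6/25 * real (card SS)" using cos_sum_bound by simp
  finally show ?thesis .
qed

lemma var_lower: "des_variance M n \<ge> real (nondihedral_rank M n) / 100 + dihedral_sum M n"
  using var_split TT_bound nondih_eq by simp

lemma var_upper: "des_variance M n \<le> real (nondihedral_rank M n) / 4 + dihedral_sum M n"
  using var_split TT_nonneg nondih_eq by simp

end

theorem proposition6p4:
  fixes M :: "nat \<Rightarrow> nat \<Rightarrow> nat \<Rightarrow> nat"
  assumes cox: "\<And>n. n \<ge> 1 \<Longrightarrow> coxeter_matrix (M n) n"
    and fin: "\<And>n. n \<ge> 1 \<Longrightarrow> finite (cox_group (M n) n)"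
  shows "((filterlim (\<lambda>n. nondihedral_rank (M n) n) at_top sequentially
           \<or> filterlim (\<lambda>n. dihedral_sum (M n) n) at_top sequentially)
          \<longrightarrow> filterlim (\<lambda>n. sqrt (des_variance (M n) n)) at_top sequentially)
       \<and> (filterlim (\<lambda>n. sqrt (des_variance (M n) n)) at_top sequentially
          \<longrightarrow> ((\<nexists>B. \<forall>n\<ge>1. nondihedral_rank (M n) n \<le> B)
               \<or> filterlim (\<lambda>n. dihedral_sum (M n) n) at_top sequentially))"
proof -
  define V where "V n = des_variance (M n) n" for n
  define R where "R n = nondihedral_rank (M n) n" for n
  define D where "D n = dihedral_sum (M n) n" for n
  have cf: "coxf (M n) n" if "n \<ge> 1" for n
  proof -
    interpret coxm "M n" n using cox[OF that] by unfold_locales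
    show ?thesis using fin[OF that] W_eq by unfold_locales simp
  qed
  have lo: "V n \<ge> real (R n) / 100 + D n" if "n \<ge> 1" for n
    using coxf.var_lower[OF cf[OF that]] unfolding V_def R_def D_def .
  have up: "V n \<le> real (R n) / 4 + D n" if "n \<ge> 1" for n
    using coxf.var_upper[OF cf[OF that]] unfolding V_def R_def D_def .
  have dn: "D n \<ge> 0" for n unfolding D_def dihedral_sum_def by (intro sum_nonneg) auto
  have ev1: "eventually (\<lambda>n. n \<ge> (1::nat)) sequentially" by (rule eventually_ge_at_top)
  have part1: "filterlim (\<lambda>n. sqrt (V n)) at_top sequentially"
    if h: "filterlim R at_top sequentially \<or> filterlim D at_top sequentially"
  proof (subst filterlim_at_top, intro allI)
    fix Z :: real
    define Y where "Y = max 0 Z"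
    have Y0: "Y \<ge> 0" unfolding Y_def by simp
    have VY: "eventually (\<lambda>n. V n \<ge> Y * Y) sequentially"
      using h
    proof
      assume hR: "filterlim R at_top sequentially"
      have "eventually (\<lambda>n. nat \<lceil>100 * Y * Y\<rceil> \<le> R n) sequentially"
        using hR unfolding filterlim_at_top by blast
      thus ?thesis using ev1
      proof eventually_elim
        case (elim n)
        have "100 * Y * Y \<le> real (R n)" using elim(1) by linarith
        hence "Y * Y \<le> real (R n) / 100" by simp
        thus ?case using lo[OF elim(2)] dn[of n] by linarith
      qed
    next
      assume hD: "filterlim D at_top sequentially"
      have "eventually (\<lambda>n. Y * Y \<le> D n) sequentially"
        using hD unfolding filterlim_at_top by blast
      thus ?thesis using ev1
      proof eventually_elim
        case (elim n) thus ?case using lo[OF elim(2)] by simp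
      qed
    qed
    show "eventually (\<lambda>n. Z \<le> sqrt (V n)) sequentially"
      using VY
    proof eventually_elim
      case (elim n)
      have "sqrt (Y * Y) \<le> sqrt (V n)" using elim by (rule real_sqrt_le_mono)
      hence "Y \<le> sqrt (V n)" using Y0 by simp
      thus ?case unfolding Y_def by simp
    qed
  qed
  have part2: "(\<nexists>B. \<forall>n\<ge>1. R n \<le> B) \<or> filterlim D at_top sequentially"
    if h: "filterlim (\<lambda>n. sqrt (V n)) at_top sequentially"
  proof (cases "\<exists>B. \<forall>n\<ge>1. R n \<le> B")
    case False thus ?thesis by blast
  next
    case True
    then obtain B where B: "\<And>n. n \<ge> 1 \<Longrightarrow> R n \<le> B" by blast
    have "filterlim D at_top sequentially"
    proof (subst filterlim_at_top, intro allI)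
      fix Z :: real
      define Y where "Y = sqrt (\<bar>Z\<bar> + real B / 4)"
      have Y0: "Y \<ge> 0" unfolding Y_def by simp
      have YY: "Y * Y = \<bar>Z\<bar> + real B / 4" unfolding Y_def by simp
      have "eventually (\<lambda>n. Y \<le> sqrt (V n)) sequentially" using h unfolding filterlim_at_top by blast
      thus "eventually (\<lambda>n. Z \<le> D n) sequentially" using ev1
      proof eventually_elim
        case (elim n)
        have Vn: "V n \<ge> 0" using elim(1) Y0 real_sqrt_ge_0_iff[of "V n"] by linarith
        have "Y * Y \<le> sqrt (V n) * sqrt (V n)" using elim(1) Y0 Vn by (intro mult_mono) auto
        also have "\<dots> = V n" using Vn by simp
        finally have "V n \<ge> \<bar>Z\<bar> + real B / 4" using YY by simp
        moreover have "real (R n) \<le> real B" using B[OF elim(2)] by simp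
        ultimately show ?case using up[OF elim(2)] by linarith
      qed
    qed
    thus ?thesis by blast
  qed
  show ?thesis using part1 part2 unfolding V_def R_def D_def by blast
qed



end
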